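(* Let $N\ge 1$ be an integer and let $W = 1+\sum_{n=1}^\infty w_n\Lambda^{-n}$ be the dressing operator of a solution of the extended lattice Gelfand–Dickey hierarchy of order $N$ (defined in the context). Let $\Psi(s,\boldsymbol{t},\boldsymbol{x},z)$ and $\Psi^*(s,\boldsymbol{t},\boldsymbol{x},z)$ be the associated wave function and dual wave function. Then for every pair $\boldsymbol{\alpha}=(\alpha_k)_{k=1}^\infty$, $\boldsymbol{\beta}=(\beta_k)_{k=1}^\infty$ of arbitrary constants, every independent copy $\boldsymbol{t}'=(t'_k)_{k=1}^\infty$ of the variables $\boldsymbol{t}$, and all $s,s'$ with $m\in\mathbb{Z}_{\ge 0}$ and $(s-s')/\hbar\in\mathbb{Z}_{\ge 0}$, \[ \oint\frac{dz}{2\pi i}\,z^{mN}\, \Psi\big(s - \xi(\boldsymbol{\alpha},z^N),\boldsymbol{t},\boldsymbol{x}+\boldsymbol{\alpha},z\big)\, \Psi^*\big(s' - \xi(\boldsymbol{\beta},z^N),\boldsymbol{t}',\boldsymbol{x}+\boldsymbol{\beta},z\big) = 0, \] where $\xi(\boldsymbol{\alpha},w)=\sum_{k\ge1}\alpha_k w^k$.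
   Context: Let $\hbar$ be a parameter, $s$ a continuous variable, and $\Lambda = e^{\hbar\partial_s}$ the shift operator, $\Lambda f(s) = f(s+\hbar)$. Difference (pseudo-difference) operators are formal sums $\sum_n a_n\Lambda^n$ whose coefficients depend on $\hbar$, $s$, $\boldsymbol{t}=(t_k)_{k\ge1}$, $\boldsymbol{x}=(x_k)_{k\ge1}$; $(\ )_{\ge0}$ and $(\ )_{<0}$ denote the projections $\sum_n a_n\Lambda^n\mapsto\sum_{n\ge0}a_n\Lambda^n$ and $\mapsto\sum_{n<0}a_n\Lambda^n$. A dressing operator $W=1+\sum_{n\ge1}w_n\Lambda^{-n}$ is a solution of the extended lattice Gelfand–Dickey hierarchy of order $N$ if $\mathfrak{L}=W\Lambda^NW^{-1}$ has no negative powers of $\Lambda$ (so $\mathfrak{L}=\Lambda^N+b_1\Lambda^{N-1}+\cdots+b_N$) and $W$ satisfies the Sato equations $\hbar\,\partial W/\partial t_k = B_kW - W\Lambda^k$ with $B_k=(W\Lambda^kW^{-1})_{\ge0}=(\mathfrak{L}^{k/N})_{\ge 0}$, and $\hbar\,\partial W/\partial x_k = \mathfrak{L}^k\hbar\,\partial W/\partial s + P_kW$ with $P_k = -\big(\mathfrak{L}^k\hbar\,(\partial W/\partial s)W^{-1}\big)_{\ge0}$, for $k=1,2,\dots$. Let $\xi(\boldsymbol{t},z)=\sum_{k\ge1}t_kz^k$. The wave function is $\Psi = \big(1+\sum_{n\ge1}w_nz^{-n}\big)z^{s/\hbar}\exp\big(\hbar^{-1}\xi(\boldsymbol{t},z)+\hbar^{-1}\xi(\boldsymbol{x},z^N)\log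 z\big)$, and the dual wave function is $\Psi^* = \big(1+\sum_{n\ge1}w^*_nz^{-n}\big)z^{-s/\hbar}\exp\big(-\hbar^{-1}\xi(\boldsymbol{t},z)-\hbar^{-1}\xi(\boldsymbol{x},z^N)\log z\big)$, where the coefficients $w_n^*$ are defined by $1+\sum_{n\ge1}w^*_n\Lambda^n=\Lambda^{-1}(W^* )^{-1}\Lambda$ with $W^*=1+\sum_{n\ge1}w_n|_{s\to s+n\hbar}\Lambda^n$ the formal adjoint of $W$. Here $z^{a/\hbar}$ means $\exp(\hbar^{-1}a\log z)$; substituting arguments as in the claim affects both the coefficients and these factors, and in the product the $\log z$ factors combine to the integer power $z^{(s-s')/\hbar}$, so the integrand is a formal Laurent series in $z$ (with coefficients formal in $\boldsymbol{\alpha},\boldsymbol{\beta}$). $\oint\frac{dz}{2\pi i}$ denotes the residue, i.e. the coefficient of $z^{-1}$. *)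

theory Defs
  imports "HOL-Analysis.Analysis"
begin

text \<open>A coefficient is a complex-valued function of the continuous variable s and of the
 infinitely many times t = (t_k), x = (x_k) (index k >= 1 is used; t 0, x 0 are spectators).
 The parameter hbar is a fixed nonzero real number, passed explicitly.\<close>

type_synonym coef = "real \<Rightarrow> (nat \<Rightarrow> real) \<Rightarrow> (nat \<Rightarrow> real) \<Rightarrow> complex"

definition czero :: coef where "czero = (\<lambda>_ _ _. 0)"

datatype dir = DS | DT nat | DX nat

definition along :: "dir \<Rightarrow> coef \<Rightarrow> real \<Rightarrow> (nat \<Rightarrow> real) \<Rightarrow> (nat \<Rightarrow> real) \<Rightarrow> real \<Rightarrow> complex" where
  "along d f s t x = (\<lambda>u. case d of DS \<Rightarrow> f u t x | DT k \<Rightarrow> f s (t(k := u)) x | DX k \<Rightarrow> f s t (x(k := u)))"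

definition coord :: "dir \<Rightarrow> real \<Rightarrow> (nat \<Rightarrow> real) \<Rightarrow> (nat \<Rightarrow> real) \<Rightarrow> real" where
  "coord d s t x = (case d of DS \<Rightarrow> s | DT k \<Rightarrow> t k | DX k \<Rightarrow> x k)"

definition partial :: "dir \<Rightarrow> coef \<Rightarrow> coef" where
  "partial d f = (\<lambda>s t x. vector_derivative (along d f s t x) (at (coord d s t x)))"

definition smooth :: "coef \<Rightarrow> bool" where
  "smooth f \<longleftrightarrow> (\<forall>ds d s t x. along d (fold partial ds f) s t x differentiable (at (coord d s t x)))"

section \<open>Pseudo-difference operators  sum_n a_n Lambda^n,  Lambda f(s) = f(s + hbar)\<close>

type_synonym pdo = "int \<Rightarrow> coef"

definition bdd_above_op :: "pdo \<Rightarrow> bool" where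
  "bdd_above_op A \<longleftrightarrow> (\<exists>M. \<forall>k>M. A k = czero)"

definition bdd_below_op :: "pdo \<Rightarrow> bool" where
  "bdd_below_op A \<longleftrightarrow> (\<exists>M. \<forall>k<M. A k = czero)"

text \<open>(a_i Lambda^i)(b_j Lambda^j) = a_i b_j(s + i hbar) Lambda^(i+j); the sum is finite whenever
 both factors are bounded above, or both bounded below.\<close>
definition op_mult :: "real \<Rightarrow> pdo \<Rightarrow> pdo \<Rightarrow> pdo" where
  "op_mult h A B = (\<lambda>k s t x. \<Sum>i\<in>{i. A i \<noteq> czero \<and> B (k - i) \<noteq> czero}.
       A i s t x * B (k - i) (s + of_int i * h) t x)"

definition Lam :: "int \<Rightarrow> pdo" where
  "Lam n = (\<lambda>k. if k = n then (\<lambda>_ _ _. 1) else czero)"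

definition op_add :: "pdo \<Rightarrow> pdo \<Rightarrow> pdo" where
  "op_add A B = (\<lambda>k s t x. A k s t x + B k s t x)"

definition op_sub :: "pdo \<Rightarrow> pdo \<Rightarrow> pdo" where
  "op_sub A B = (\<lambda>k s t x. A k s t x - B k s t x)"

definition op_scale :: "real \<Rightarrow> pdo \<Rightarrow> pdo" where
  "op_scale c A = (\<lambda>k s t x. of_real c * A k s t x)"

definition op_pos :: "pdo \<Rightarrow> pdo" where
  "op_pos A = (\<lambda>k. if k \<ge> 0 then A k else czero)"

definition op_pow :: "real \<Rightarrow> pdo \<Rightarrow> nat \<Rightarrow> pdo" where
  "op_pow h A n = (op_mult h A ^^ n) (Lam 0)"

definition op_partial :: "dir \<Rightarrow> pdo \<Rightarrow> pdo" where
  "op_partial d A = (\<lambda>k. partial d (A k))"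

definition inv_above :: "real \<Rightarrow> pdo \<Rightarrow> pdo" where
  "inv_above h A = (THE B. bdd_above_op B \<and> op_mult h A B = Lam 0 \<and> op_mult h B A = Lam 0)"

definition inv_below :: "real \<Rightarrow> pdo \<Rightarrow> pdo" where
  "inv_below h A = (THE B. bdd_below_op B \<and> op_mult h A B = Lam 0 \<and> op_mult h B A = Lam 0)"

text \<open>Formal adjoint: (a_n Lambda^n)^* = Lambda^(-n) a_n = a_n(s - n hbar) Lambda^(-n).\<close>
definition adj :: "real \<Rightarrow> pdo \<Rightarrow> pdo" where
  "adj h A = (\<lambda>k s t x. A (- k) (s + of_int k * h) t x)"

definition dressing_op :: "pdo \<Rightarrow> bool" where
  "dressing_op W \<longleftrightarrow> W 0 = (\<lambda>_ _ _. 1) \<and> (\<forall>k>0. W k = czero)"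

definition GD_L :: "real \<Rightarrow> nat \<Rightarrow> pdo \<Rightarrow> pdo" where
  "GD_L h N W = op_mult h (op_mult h W (Lam (int N))) (inv_above h W)"

definition GD_B :: "real \<Rightarrow> nat \<Rightarrow> pdo \<Rightarrow> pdo" where
  "GD_B h k W = op_pos (op_mult h (op_mult h W (Lam (int k))) (inv_above h W))"

definition GD_P :: "real \<Rightarrow> nat \<Rightarrow> nat \<Rightarrow> pdo \<Rightarrow> pdo" where
  "GD_P h N k W = op_scale (-1) (op_pos (op_mult h
      (op_mult h (op_pow h (GD_L h N W) k) (op_scale h (op_partial DS W))) (inv_above h W)))"

definition lattice_GD_solution :: "real \<Rightarrow> nat \<Rightarrow> pdo \<Rightarrow> bool" where
  "lattice_GD_solution h N W \<longleftrightarrow>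
     dressing_op W \<and> (\<forall>k. smooth (W k)) \<and>
     (\<forall>k<0. GD_L h N W k = czero) \<and>
     (\<forall>k\<ge>1. op_scale h (op_partial (DT k) W)
              = op_sub (op_mult h (GD_B h k W) W) (op_mult h W (Lam (int k)))) \<and>
     (\<forall>k\<ge>1. op_scale h (op_partial (DX k) W)
              = op_add (op_mult h (op_pow h (GD_L h N W) k) (op_scale h (op_partial DS W)))
                       (op_mult h (GD_P h N k W) W))"

text \<open>A z-series  sum_j F j z^j  with coefficient functions.  The non-exponential part of Psi is
 1 + sum_n w_n z^(-n), i.e. coefficient of z^j is W j.  The dual coefficients w*_n are the
 coefficients of Lambda^(-1) (W^*)^(-1) Lambda; the non-exponential part of Psi^* is
 1 + sum_n w*_n z^(-n).\<close>

definition wave_series :: "pdo \<Rightarrow> int \<Rightarrow> coef" where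
  "wave_series W = W"

definition dual_coeffs :: "real \<Rightarrow> pdo \<Rightarrow> pdo" where
  "dual_coeffs h W = op_mult h (op_mult h (Lam (-1)) (inv_below h (adj h W))) (Lam 1)"

definition dual_wave_series :: "real \<Rightarrow> pdo \<Rightarrow> int \<Rightarrow> coef" where
  "dual_wave_series h W = (\<lambda>j. dual_coeffs h W (- j))"

text \<open>Formal expansion in the constants alpha (resp. beta) and in y = t' - t.
 The integrand is a formal power series in alpha, beta, y; its Taylor coefficients are obtained
 by the derivations d/d alpha_k, d/d beta_k, d/d y_k at 0.  By the chain rule, on
 F(s - xi(alpha, z^N), t, x + alpha; z) the derivation d/d alpha_k acts as
 d/dx_k - z^(N k) d/ds, and on exp(-xi(y,z)/hbar) G(t + y; z) the derivation d/d y_k acts as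
 d/dt_k - z^k/hbar.  (The z^(s/hbar), log z factors cancel as stated in the context.)\<close>

definition d_alpha :: "nat \<Rightarrow> nat \<Rightarrow> (int \<Rightarrow> coef) \<Rightarrow> (int \<Rightarrow> coef)" where
  "d_alpha N k F = (\<lambda>j s t x. partial (DX k) (F j) s t x - partial DS (F (j - int (N * k))) s t x)"

definition d_y :: "real \<Rightarrow> nat \<Rightarrow> (int \<Rightarrow> coef) \<Rightarrow> (int \<Rightarrow> coef)" where
  "d_y h k F = (\<lambda>j s t x. partial (DT k) (F j) s t x - of_real (1 / h) * F (j - int k) s t x)"

text \<open>Residue (coefficient of z^(-1)) of z^c A(z) B(z) for z-Laurent series A, B.\<close>
definition res_prod :: "int \<Rightarrow> (int \<Rightarrow> complex) \<Rightarrow> (int \<Rightarrow> complex) \<Rightarrow> complex" where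
  "res_prod c A B = (\<Sum>i\<in>{i. A i \<noteq> 0 \<and> B (- 1 - c - i) \<noteq> 0}. A i * B (- 1 - c - i))"

end

theory Submission
  imports Defs "HOL-Library.Groups_Big_Fun"
begin


section \<open>Smoothness closure\<close>

definition shiftc :: "real \<Rightarrow> coef \<Rightarrow> coef" where
  "shiftc c f = (\<lambda>s t x. f (s + c) t x)"

definition diffall :: "coef \<Rightarrow> bool" where
  "diffall f \<longleftrightarrow> (\<forall>d s t x. along d f s t x differentiable (at (coord d s t x)))"

lemma vd_translate:
  fixes g :: "real \<Rightarrow> complex"
  shows "vector_derivative (\<lambda>u. g (u + c)) (at a) = vector_derivative g (at (a + c))"
proof -
  have 1: "((\<lambda>u. g (u + c)) has_vector_derivative D) (at a)"
    if "(g has_vector_derivative D) (at (a + c))" for g :: "real \<Rightarrow> complex" and D c a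
  proof -
    have "((\<lambda>u. u + c) has_vector_derivative 1) (at a)"
      by (auto intro!: derivative_eq_intros)
    from vector_diff_chain_at[OF this, of g D] that show ?thesis by (simp add: o_def)
  qed
  have "((\<lambda>u. g (u + c)) has_vector_derivative D) (at a) \<longleftrightarrow> (g has_vector_derivative D) (at (a + c))" for D
  proof
    assume "((\<lambda>u. g (u + c)) has_vector_derivative D) (at a)"
    then have "((\<lambda>u. g (u + c)) has_vector_derivative D) (at (a + c + (- c)))" by simp
    from 1[OF this]
    show "(g has_vector_derivative D) (at (a + c))" by simp
  next
    assume "(g has_vector_derivative D) (at (a + c))"
    then show "((\<lambda>u. g (u + c)) has_vector_derivative D) (at a)" by (rule 1)
  qed
  then show ?thesis unfolding vector_derivative_def by simp
qed

lemma differentiable_translate: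
  fixes g :: "real \<Rightarrow> complex"
  assumes "g differentiable (at (a + c))"
  shows "(\<lambda>u. g (u + c)) differentiable (at a)"
proof -
  have "((\<lambda>u. u + c) has_vector_derivative 1) (at a)"
    by (auto intro!: derivative_eq_intros)
  moreover have "(g has_vector_derivative vector_derivative g (at (a + c))) (at (a + c))"
    using assms vector_derivative_works by blast
  ultimately have "((g \<circ> (\<lambda>u. u + c)) has_vector_derivative (1 *\<^sub>R vector_derivative g (at (a + c)))) (at a)"
    by (intro vector_diff_chain_at) auto
  then show ?thesis unfolding o_def using differentiableI_vector by blast
qed

lemma along_add: "along d (\<lambda>s t x. f s t x + g s t x) s t x = (\<lambda>u. along d f s t x u + along d g s t x u)"
  by (cases d) (auto simp: along_def)
lemma along_mult: "along d (\<lambda>s t x. f s t x * g s t x) s t x = (\<lambda>u. along d f s t x u * along d g s t x u)"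
  by (cases d) (auto simp: along_def)
lemma along_const: "along d (\<lambda>s t x. c) s t x = (\<lambda>u. c)"
  by (cases d) (auto simp: along_def)

lemma partial_add:
  assumes "diffall f" "diffall g"
  shows "partial d (\<lambda>s t x. f s t x + g s t x) = (\<lambda>s t x. partial d f s t x + partial d g s t x)"
  using assms unfolding partial_def diffall_def along_add by (auto intro!: ext)

lemma partial_mult:
  assumes "diffall f" "diffall g"
  shows "partial d (\<lambda>s t x. f s t x * g s t x) = (\<lambda>s t x. partial d f s t x * g s t x + f s t x * partial d g s t x)"
proof (intro ext)
  fix s t x
  have a: "along d f s t x (coord d s t x) = f s t x" "along d g s t x (coord d s t x) = g s t x"
    by (cases d; simp add: along_def coord_def)+
  show "partial d (\<lambda>s t x. f s t x * g s t x) s t x = partial d f s t x * g s t x + f s t x * partial d g s t x"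
    using assms unfolding partial_def diffall_def along_mult by (simp add: a)
qed

lemma partial_const: "partial d (\<lambda>s t x. c) = (\<lambda>s t x. 0)"
  unfolding partial_def along_const by simp

lemma partial_czero: "partial d czero = czero"
  using partial_const[of d 0] by (simp add: czero_def)

lemma partial_shift: "partial d (shiftc c f) = shiftc c (partial d f)"
proof (intro ext)
  fix s t x
  show "partial d (shiftc c f) s t x = shiftc c (partial d f) s t x"
  proof (cases d)
    case DS
    then show ?thesis unfolding partial_def shiftc_def along_def coord_def
      using vd_translate[of "\<lambda>u. f u t x" c s] by simp
  qed (auto simp: partial_def shiftc_def along_def coord_def)
qed

lemma diffall_shift: "diffall f \<Longrightarrow> diffall (shiftc c f)"
  unfolding diffall_def
proof (intro allI)
  fix d s t x assume H: "\<forall>d s t x. along d f s t x differentiable at (coord d s t x)"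
  show "along d (shiftc c f) s t x differentiable at (coord d s t x)"
  proof (cases d)
    case DS
    have "(\<lambda>u. f u t x) differentiable (at (s + c))" using H[rule_format, of DS "s+c" t x]
      by (simp add: along_def coord_def)
    from differentiable_translate[OF this] show ?thesis using DS by (simp add: along_def coord_def shiftc_def)
  next
    case (DT k) then show ?thesis using H[rule_format, of d "s+c" t x]
      by (simp add: along_def coord_def shiftc_def)
  next
    case (DX k) then show ?thesis using H[rule_format, of d "s+c" t x]
      by (simp add: along_def coord_def shiftc_def)
  qed
qed

inductive_set SC :: "coef set" where
  SC_smooth: "smooth f \<Longrightarrow> f \<in> SC"
| SC_const: "(\<lambda>s t x. c) \<in> SC"
| SC_add: "f \<in> SC \<Longrightarrow> g \<in> SC \<Longrightarrow> (\<lambda>s t x. f s t x + g s t x) \<in> SC"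
| SC_mult: "f \<in> SC \<Longrightarrow> g \<in> SC \<Longrightarrow> (\<lambda>s t x. f s t x * g s t x) \<in> SC"
| SC_shift: "f \<in> SC \<Longrightarrow> shiftc c f \<in> SC"

lemma smooth_diffall: "smooth f \<Longrightarrow> diffall f"
  unfolding smooth_def diffall_def by (metis fold_Nil id_apply)

lemma smooth_partial: "smooth f \<Longrightarrow> smooth (partial d f)"
  unfolding smooth_def by (metis fold_Cons o_apply)

lemma SC_main: "f \<in> SC \<Longrightarrow> diffall f \<and> (\<forall>d. partial d f \<in> SC)"
proof (induction rule: SC.induct)
  case (SC_smooth f)
  then show ?case by (auto intro: smooth_diffall SC.SC_smooth smooth_partial)
next
  case (SC_const c)
  then show ?case by (auto simp: diffall_def along_const partial_const intro: SC.SC_const)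
next
  case (SC_add f g)
  then show ?case
    by (auto simp: partial_add intro!: SC.SC_add) (auto simp: diffall_def along_add)
next
  case (SC_mult f g)
  then show ?case
    by (auto simp: partial_mult intro!: SC.SC_add SC.SC_mult) (auto simp: diffall_def along_mult)
next
  case (SC_shift f c)
  then show ?case by (auto simp: partial_shift diffall_shift intro: SC.SC_shift)
qed

lemma SC_smooth_iff: "f \<in> SC \<longleftrightarrow> smooth f"
proof
  assume "f \<in> SC"
  have "fold partial ds f \<in> SC" for ds
    using \<open>f \<in> SC\<close> by (induction ds arbitrary: f) (auto dest: SC_main)
  then show "smooth f" unfolding smooth_def using SC_main diffall_def by blast
qed (rule SC_smooth)

lemma smooth_add: "smooth f \<Longrightarrow> smooth g \<Longrightarrow> smooth (\<lambda>s t x. f s t x + g s t x)"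
  by (simp add: SC_smooth_iff[symmetric] SC_add)
lemma smooth_mult: "smooth f \<Longrightarrow> smooth g \<Longrightarrow> smooth (\<lambda>s t x. f s t x * g s t x)"
  by (simp add: SC_smooth_iff[symmetric] SC_mult)
lemma smooth_const: "smooth (\<lambda>s t x. c)"
  by (simp add: SC_smooth_iff[symmetric] SC_const)
lemma smooth_shift: "smooth f \<Longrightarrow> smooth (\<lambda>s t x. f (s + c) t x)"
  using SC_shift[of f c] by (simp add: SC_smooth_iff shiftc_def)
lemma smooth_czero: "smooth czero"
  using smooth_const[of 0] by (simp add: czero_def)
lemma smooth_cmult: "smooth f \<Longrightarrow> smooth (\<lambda>s t x. c * f s t x)"
  using smooth_mult[OF smooth_const] by blast
lemma smooth_neg: "smooth f \<Longrightarrow> smooth (\<lambda>s t x. - f s t x)"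
  using smooth_cmult[of f "-1"] by simp
lemma smooth_diff: "smooth f \<Longrightarrow> smooth g \<Longrightarrow> smooth (\<lambda>s t x. f s t x - g s t x)"
  using smooth_add[OF _ smooth_neg, of f g] by simp
lemma smooth_sum: "(\<And>i. i \<in> S \<Longrightarrow> smooth (F i)) \<Longrightarrow> smooth (\<lambda>s t x. \<Sum>i\<in>S. F i s t x)"
proof (induction S rule: infinite_finite_induct)
  case (infinite A) then show ?case by (simp add: smooth_const)
next
  case empty then show ?case by (simp add: smooth_const)
next
  case (insert a A) then show ?case by (simp add: smooth_add)
qed

lemma partial_sum:
  assumes "\<And>i. i \<in> S \<Longrightarrow> smooth (F i)"
  shows "partial d (\<lambda>s t x. \<Sum>i\<in>S. F i s t x) = (\<lambda>s t x. \<Sum>i\<in>S. partial d (F i) s t x)"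
  using assms
proof (induction S rule: infinite_finite_induct)
  case (infinite A) then show ?case by (simp add: partial_const)
next
  case empty then show ?case by (simp add: partial_const)
next
  case (insert a A)
  have "partial d (\<lambda>s t x. F a s t x + (\<Sum>i\<in>A. F i s t x)) = (\<lambda>s t x. partial d (F a) s t x + partial d (\<lambda>s t x. \<Sum>i\<in>A. F i s t x) s t x)"
    by (rule partial_add) (auto intro!: smooth_diffall smooth_sum insert.prems)
  then show ?case using insert by simp
qed



section \<open>Operator algebra\<close>

abbreviation ba where "ba \<equiv> bdd_above_op"

definition ub :: "pdo \<Rightarrow> int" where "ub A = (SOME M. \<forall>k>M. A k = czero)"

lemma ub:
  assumes "ba A" "k > ub A" shows "A k = czero"
proof -
  have "\<exists>M. \<forall>k>M. A k = czero" using assms(1) unfolding bdd_above_op_def .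
  then have "\<forall>k>ub A. A k = czero" unfolding ub_def by (rule someI_ex)
  then show ?thesis using assms(2) by blast
qed

lemma czero_val: "A = czero \<Longrightarrow> A s t x = 0"
  by (simp add: czero_def)

lemma nz_le_ub: "ba A \<Longrightarrow> A k s t x \<noteq> 0 \<Longrightarrow> k \<le> ub A"
proof (rule ccontr)
  assume a: "ba A" "A k s t x \<noteq> 0" "\<not> k \<le> ub A"
  then have "A k = czero" using ub by simp
  then show False using a(2) by (simp add: czero_def)
qed

lemma op_mult_S:
  assumes "finite S" "\<And>i. i \<notin> S \<Longrightarrow> A i = czero \<or> B (k - i) = czero"
  shows "op_mult h A B k s t x = (\<Sum>i\<in>S. A i s t x * B (k - i) (s + of_int i * h) t x)"
  unfolding op_mult_def
proof (rule sum.mono_neutral_left)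
  show "finite S" by fact
  show "{i. A i \<noteq> czero \<and> B (k - i) \<noteq> czero} \<subseteq> S" using assms(2) by blast
  show "\<forall>i\<in>S - {i. A i \<noteq> czero \<and> B (k - i) \<noteq> czero}. A i s t x * B (k - i) (s + of_int i * h) t x = 0"
    by (auto simp: czero_def)
qed

lemma op_mult_int:
  assumes "\<And>i. i > MA \<Longrightarrow> A i = czero" "\<And>j. j > MB \<Longrightarrow> B j = czero" "lo \<le> k - MB" "MA \<le> hi"
  shows "op_mult h A B k s t x = (\<Sum>i\<in>{lo..hi}. A i s t x * B (k - i) (s + of_int i * h) t x)"
  by (rule op_mult_S) (use assms in \<open>auto simp: not_le\<close>)

lemma op_mult_int_fun:
  assumes "\<And>i. i > MA \<Longrightarrow> A i = czero" "\<And>j. j > MB \<Longrightarrow> B j = czero" "lo \<le> k - MB" "MA \<le> hi"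
  shows "op_mult h A B k = (\<lambda>s t x. \<Sum>i\<in>{lo..hi}. A i s t x * B (k - i) (s + of_int i * h) t x)"
  using op_mult_int[OF assms] by (intro ext)

lemma op_mult_ub:
  assumes "ba A" "ba B"
  shows "op_mult h A B k s t x = (\<Sum>i\<in>{k - ub B..ub A}. A i s t x * B (k - i) (s + of_int i * h) t x)"
  by (rule op_mult_int[of "ub A" _ "ub B"]) (auto intro: ub assms)

lemma fin_supp:
  assumes "ba A" "ba B"
  shows "finite {i. A i s t x * B (k - i) s' t' x' \<noteq> 0}"
proof (rule finite_subset)
  show "{i. A i s t x * B (k - i) s' t' x' \<noteq> 0} \<subseteq> {k - ub B..ub A}"
  proof
    fix i assume "i \<in> {i. A i s t x * B (k - i) s' t' x' \<noteq> 0}"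
    then have "A i s t x \<noteq> 0" "B (k - i) s' t' x' \<noteq> 0" by auto
    then have "i \<le> ub A" "k - i \<le> ub B" using nz_le_ub[OF assms(1)] nz_le_ub[OF assms(2)] by blast+
    then show "i \<in> {k - ub B..ub A}" by simp
  qed
qed simp

lemma fin_supp2:
  assumes "ba A" "ba B"
  shows "finite {i. A i s t x * B (k - i) (s + of_int i * h) t x \<noteq> 0}"
proof (rule finite_subset)
  show "{i. A i s t x * B (k - i) (s + of_int i * h) t x \<noteq> 0} \<subseteq> {k - ub B..ub A}"
  proof
    fix i assume "i \<in> {i. A i s t x * B (k - i) (s + of_int i * h) t x \<noteq> 0}"
    then have "A i s t x \<noteq> 0" "B (k - i) (s + of_int i * h) t x \<noteq> 0" by auto
    then have "i \<le> ub A" "k - i \<le> ub B" using nz_le_ub[OF assms(1)] nz_le_ub[OF assms(2)] by blast+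
    then show "i \<in> {k - ub B..ub A}" by simp
  qed
qed simp

lemma op_mult_any:
  assumes "ba A" "ba B"
  shows "op_mult h A B k s t x = Sum_any (\<lambda>i. A i s t x * B (k - i) (s + of_int i * h) t x)"
proof -
  have "Sum_any (\<lambda>i. A i s t x * B (k - i) (s + of_int i * h) t x)
      = (\<Sum>i\<in>{k - ub B..ub A}. A i s t x * B (k - i) (s + of_int i * h) t x)"
  proof (rule Sum_any.expand_superset)
    show "{a. A a s t x * B (k - a) (s + of_int a * h) t x \<noteq> 0} \<subseteq> {k - ub B..ub A}"
    proof
      fix i assume "i \<in> {i. A i s t x * B (k - i) (s + of_int i * h) t x \<noteq> 0}"
      then have "A i s t x \<noteq> 0" "B (k - i) (s + of_int i * h) t x \<noteq> 0" by auto
      then have "i \<le> ub A" "k - i \<le> ub B" using nz_le_ub[OF assms(1)] nz_le_ub[OF assms(2)] by blast+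
      then show "i \<in> {k - ub B..ub A}" by simp
    qed
  qed simp
  then show ?thesis using op_mult_ub[OF assms] by simp
qed

lemma op_mult_hi:
  assumes "ba A" "ba B" "k > ub A + ub B"
  shows "op_mult h A B k = czero"
proof -
  have S: "{i. A i \<noteq> czero \<and> B (k - i) \<noteq> czero} = {}"
  proof (rule ccontr)
    assume "{i. A i \<noteq> czero \<and> B (k - i) \<noteq> czero} \<noteq> {}"
    then obtain i where i: "A i \<noteq> czero" "B (k - i) \<noteq> czero" by blast
    have "i \<le> ub A" using i(1) ub[OF assms(1)] not_less by blast
    moreover have "k - i \<le> ub B" using i(2) ub[OF assms(2)] not_less by blast
    ultimately show False using assms(3) by linarith
  qed
  show ?thesis unfolding op_mult_def S by (simp add: czero_def)
qed

lemma ba_mult: "ba A \<Longrightarrow> ba B \<Longrightarrow> ba (op_mult h A B)"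
  unfolding bdd_above_op_def[of "op_mult h A B"] using op_mult_hi by blast

lemma ba_add: "ba A \<Longrightarrow> ba B \<Longrightarrow> ba (op_add A B)"
proof -
  assume a: "ba A" "ba B"
  have "\<forall>k>max (ub A) (ub B). op_add A B k = czero"
    using ub[OF a(1)] ub[OF a(2)] by (auto simp: op_add_def czero_def)
  then show ?thesis unfolding bdd_above_op_def by blast
qed

lemma ba_sub: "ba A \<Longrightarrow> ba B \<Longrightarrow> ba (op_sub A B)"
proof -
  assume a: "ba A" "ba B"
  have "\<forall>k>max (ub A) (ub B). op_sub A B k = czero"
    using ub[OF a(1)] ub[OF a(2)] by (auto simp: op_sub_def czero_def)
  then show ?thesis unfolding bdd_above_op_def by blast
qed

lemma ba_scale: "ba A \<Longrightarrow> ba (op_scale c A)"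
proof -
  assume a: "ba A"
  have "\<forall>k>ub A. op_scale c A k = czero"
    using ub[OF a] by (auto simp: op_scale_def czero_def)
  then show ?thesis unfolding bdd_above_op_def by blast
qed

lemma ba_pos: "ba A \<Longrightarrow> ba (op_pos A)"
  unfolding bdd_above_op_def op_pos_def by auto

lemma ba_partial: "ba A \<Longrightarrow> ba (op_partial d A)"
proof -
  assume a: "ba A"
  have "\<forall>k>ub A. op_partial d A k = czero"
    using ub[OF a] by (auto simp: op_partial_def partial_czero)
  then show ?thesis unfolding bdd_above_op_def by blast
qed

lemma Lam_neq: "(\<lambda>_ _ _. 1::complex) \<noteq> czero"
proof
  assume "(\<lambda>_ _ _. 1::complex) = czero"
  then have "(1::complex) = 0" unfolding czero_def by meson
  then show False by simp
qed

lemma ba_Lam: "ba (Lam n)"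
  unfolding bdd_above_op_def Lam_def by auto

lemma mult_Lam_right: "op_mult h A (Lam n) k = A (k - n)"
proof (intro ext)
  fix s t x
  have S: "{i. A i \<noteq> czero \<and> Lam n (k - i) \<noteq> czero} = (if A (k - n) \<noteq> czero then {k - n} else {})"
    using Lam_neq by (auto simp: Lam_def)
  show "op_mult h A (Lam n) k s t x = A (k - n) s t x"
    unfolding op_mult_def S by (auto simp: Lam_def czero_def)
qed

lemma mult_Lam_left: "op_mult h (Lam n) A k s t x = A (k - n) (s + of_int n * h) t x"
proof -
  have S: "{i. Lam n i \<noteq> czero \<and> A (k - i) \<noteq> czero} = (if A (k - n) \<noteq> czero then {n} else {})"
    using Lam_neq by (auto simp: Lam_def)
  show ?thesis
    unfolding op_mult_def S by (auto simp: Lam_def czero_def)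
qed

lemma mult_Lam0_left: "op_mult h (Lam 0) A = A"
  by (intro ext) (simp add: mult_Lam_left)
lemma mult_Lam0_right: "op_mult h A (Lam 0) = A"
  by (intro ext) (simp add: mult_Lam_right)

lemma Lam_Lam: "op_mult h (Lam a) (Lam b) = Lam (a + b)"
proof (rule ext)
  fix k show "op_mult h (Lam a) (Lam b) k = Lam (a + b) k"
    unfolding mult_Lam_right by (auto simp: Lam_def)
qed


lemma op_mult_assoc:
  assumes A: "ba A" and B: "ba B" and C: "ba C"
  shows "op_mult h (op_mult h A B) C = op_mult h A (op_mult h B C)"
proof (intro ext)
  fix k s t x
  define g where "g i j = A i s t x * B (j - i) (s + of_int i * h) t x * C (k - j) (s + of_int j * h) t x" for i j
  have AB: "ba (op_mult h A B)" and BC: "ba (op_mult h B C)" using A B C by (auto intro: ba_mult)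
  have "op_mult h (op_mult h A B) C k s t x
      = Sum_any (\<lambda>j. op_mult h A B j s t x * C (k - j) (s + of_int j * h) t x)"
    by (rule op_mult_any[OF AB C])
  also have "\<dots> = Sum_any (\<lambda>j. Sum_any (\<lambda>i. g i j))"
  proof (rule Sum_any.cong)
    fix j
    have "op_mult h A B j s t x * C (k - j) (s + of_int j * h) t x
       = Sum_any (\<lambda>i. A i s t x * B (j - i) (s + of_int i * h) t x) * C (k - j) (s + of_int j * h) t x"
      by (simp only: op_mult_any[OF A B])
    also have "\<dots> = Sum_any (\<lambda>i. g i j)"
      unfolding g_def by (rule Sum_any_left_distrib[OF fin_supp2[OF A B]])
    finally show "op_mult h A B j s t x * C (k - j) (s + of_int j * h) t x = Sum_any (\<lambda>i. g i j)" .
  qed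
  also have "\<dots> = Sum_any (\<lambda>i. Sum_any (\<lambda>j. g i j))"
  proof (rule Sum_any.swap[symmetric])
    show "finite ({k - ub C - ub B..ub A} \<times> {k - ub C..ub A + ub B})" by simp
    show "{a. \<exists>b. g a b \<noteq> 0} \<times> {b. \<exists>a. g a b \<noteq> 0} \<subseteq> {k - ub C - ub B..ub A} \<times> {k - ub C..ub A + ub B}"
    proof
      fix p assume "p \<in> {a. \<exists>b. g a b \<noteq> 0} \<times> {b. \<exists>a. g a b \<noteq> 0}"
      then obtain i j i' j' where p: "p = (i, j)" "g i j' \<noteq> 0" "g i' j \<noteq> 0" by auto
      from p(2) have "A i s t x \<noteq> 0" "B (j' - i) (s + of_int i * h) t x \<noteq> 0" "C (k - j') (s + of_int j' * h) t x \<noteq> 0"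
        unfolding g_def by auto
      then have 1: "i \<le> ub A" "j' - i \<le> ub B" "k - j' \<le> ub C"
        using nz_le_ub[OF A] nz_le_ub[OF B] nz_le_ub[OF C] by blast+
      from p(3) have "A i' s t x \<noteq> 0" "B (j - i') (s + of_int i' * h) t x \<noteq> 0" "C (k - j) (s + of_int j * h) t x \<noteq> 0"
        unfolding g_def by auto
      then have 2: "i' \<le> ub A" "j - i' \<le> ub B" "k - j \<le> ub C"
        using nz_le_ub[OF A] nz_le_ub[OF B] nz_le_ub[OF C] by blast+
      from 1 2 show "p \<in> {k - ub C - ub B..ub A} \<times> {k - ub C..ub A + ub B}" unfolding p(1) by simp
    qed
  qed
  also have "\<dots> = Sum_any (\<lambda>i. A i s t x * op_mult h B C (k - i) (s + of_int i * h) t x)"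
  proof (rule Sum_any.cong)
    fix i
    have "Sum_any (\<lambda>j. g i j) = Sum_any (\<lambda>j'. g i (j' + i))"
      by (rule Sum_any.reindex_cong[of "\<lambda>j'. j' + i"]) (auto simp: bij_plus_right)
    also have "\<dots> = Sum_any (\<lambda>j'. A i s t x * (B j' (s + of_int i * h) t x * C (k - i - j') (s + of_int i * h + of_int j' * h) t x))"
      unfolding g_def by (intro Sum_any.cong) (simp add: algebra_simps)
    also have "\<dots> = A i s t x * Sum_any (\<lambda>j'. B j' (s + of_int i * h) t x * C (k - i - j') (s + of_int i * h + of_int j' * h) t x)"
      by (rule Sum_any_right_distrib[symmetric]) (rule fin_supp2[OF B C])
    also have "\<dots> = A i s t x * op_mult h B C (k - i) (s + of_int i * h) t x"
      by (simp only: op_mult_any[OF B C])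
    finally show "Sum_any (\<lambda>j. g i j) = A i s t x * op_mult h B C (k - i) (s + of_int i * h) t x" .
  qed
  also have "\<dots> = op_mult h A (op_mult h B C) k s t x"
    by (rule op_mult_any[OF A BC, symmetric])
  finally show "op_mult h (op_mult h A B) C k s t x = op_mult h A (op_mult h B C) k s t x" .
qed



definition good :: "pdo \<Rightarrow> bool" where "good A \<longleftrightarrow> ba A \<and> (\<forall>k. smooth (A k))"
definition nn :: "pdo \<Rightarrow> bool" where "nn A \<longleftrightarrow> (\<forall>k<0. A k = czero)"
definition Z :: pdo where "Z = (\<lambda>k. czero)"

lemma good_ba: "good A \<Longrightarrow> ba A" by (simp add: good_def)
lemma good_sm: "good A \<Longrightarrow> smooth (A k)" by (simp add: good_def)

lemma along_diff: "along d (\<lambda>s t x. f s t x - g s t x) s t x = (\<lambda>u. along d f s t x u - along d g s t x u)"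
  by (cases d) (auto simp: along_def)

lemma partial_diff:
  assumes "diffall f" "diffall g"
  shows "partial d (\<lambda>s t x. f s t x - g s t x) = (\<lambda>s t x. partial d f s t x - partial d g s t x)"
  using assms unfolding partial_def diffall_def along_diff by (auto intro!: ext)

lemma mult_add_left:
  assumes A: "ba A" and B: "ba B" and C: "ba C"
  shows "op_mult h (op_add A B) C = op_add (op_mult h A C) (op_mult h B C)"
proof (intro ext)
  fix k s t x
  let ?lo = "k - ub C" and ?hi = "max (ub A) (ub B)"
  have "op_mult h (op_add A B) C k s t x = (\<Sum>i\<in>{?lo..?hi}. op_add A B i s t x * C (k - i) (s + of_int i * h) t x)"
    by (rule op_mult_int[of ?hi _ "ub C"]) (use ub[OF A] ub[OF B] ub[OF C] in \<open>auto simp: op_add_def czero_def\<close>)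
  moreover have "op_mult h A C k s t x = (\<Sum>i\<in>{?lo..?hi}. A i s t x * C (k - i) (s + of_int i * h) t x)"
    by (rule op_mult_int[of "ub A" _ "ub C"]) (use ub[OF A] ub[OF C] in auto)
  moreover have "op_mult h B C k s t x = (\<Sum>i\<in>{?lo..?hi}. B i s t x * C (k - i) (s + of_int i * h) t x)"
    by (rule op_mult_int[of "ub B" _ "ub C"]) (use ub[OF B] ub[OF C] in auto)
  ultimately show "op_mult h (op_add A B) C k s t x = op_add (op_mult h A C) (op_mult h B C) k s t x"
    by (simp add: op_add_def distrib_right sum.distrib)
qed

lemma mult_add_right:
  assumes A: "ba A" and B: "ba B" and C: "ba C"
  shows "op_mult h A (op_add B C) = op_add (op_mult h A B) (op_mult h A C)"
proof (intro ext)
  fix k s t x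
  let ?lo = "k - max (ub B) (ub C)" and ?hi = "ub A"
  have "op_mult h A (op_add B C) k s t x = (\<Sum>i\<in>{?lo..?hi}. A i s t x * op_add B C (k - i) (s + of_int i * h) t x)"
    by (rule op_mult_int[of ?hi _ "max (ub B) (ub C)"]) (use ub[OF A] ub[OF B] ub[OF C] in \<open>auto simp: op_add_def czero_def\<close>)
  moreover have "op_mult h A B k s t x = (\<Sum>i\<in>{?lo..?hi}. A i s t x * B (k - i) (s + of_int i * h) t x)"
    by (rule op_mult_int[of "ub A" _ "ub B"]) (use ub[OF A] ub[OF B] in auto)
  moreover have "op_mult h A C k s t x = (\<Sum>i\<in>{?lo..?hi}. A i s t x * C (k - i) (s + of_int i * h) t x)"
    by (rule op_mult_int[of "ub A" _ "ub C"]) (use ub[OF A] ub[OF C] in auto)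
  ultimately show "op_mult h A (op_add B C) k s t x = op_add (op_mult h A B) (op_mult h A C) k s t x"
    by (simp add: op_add_def distrib_left sum.distrib)
qed

lemma mult_sub_left:
  assumes A: "ba A" and B: "ba B" and C: "ba C"
  shows "op_mult h (op_sub A B) C = op_sub (op_mult h A C) (op_mult h B C)"
proof (intro ext)
  fix k s t x
  let ?lo = "k - ub C" and ?hi = "max (ub A) (ub B)"
  have "op_mult h (op_sub A B) C k s t x = (\<Sum>i\<in>{?lo..?hi}. op_sub A B i s t x * C (k - i) (s + of_int i * h) t x)"
    by (rule op_mult_int[of ?hi _ "ub C"]) (use ub[OF A] ub[OF B] ub[OF C] in \<open>auto simp: op_sub_def czero_def\<close>)
  moreover have "op_mult h A C k s t x = (\<Sum>i\<in>{?lo..?hi}. A i s t x * C (k - i) (s + of_int i * h) t x)"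
    by (rule op_mult_int[of "ub A" _ "ub C"]) (use ub[OF A] ub[OF C] in auto)
  moreover have "op_mult h B C k s t x = (\<Sum>i\<in>{?lo..?hi}. B i s t x * C (k - i) (s + of_int i * h) t x)"
    by (rule op_mult_int[of "ub B" _ "ub C"]) (use ub[OF B] ub[OF C] in auto)
  ultimately show "op_mult h (op_sub A B) C k s t x = op_sub (op_mult h A C) (op_mult h B C) k s t x"
    by (simp add: op_sub_def left_diff_distrib sum_subtractf)
qed

lemma mult_sub_right:
  assumes A: "ba A" and B: "ba B" and C: "ba C"
  shows "op_mult h A (op_sub B C) = op_sub (op_mult h A B) (op_mult h A C)"
proof (intro ext)
  fix k s t x
  let ?lo = "k - max (ub B) (ub C)" and ?hi = "ub A"
  have "op_mult h A (op_sub B C) k s t x = (\<Sum>i\<in>{?lo..?hi}. A i s t x * op_sub B C (k - i) (s + of_int i * h) t x)"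
    by (rule op_mult_int[of ?hi _ "max (ub B) (ub C)"]) (use ub[OF A] ub[OF B] ub[OF C] in \<open>auto simp: op_sub_def czero_def\<close>)
  moreover have "op_mult h A B k s t x = (\<Sum>i\<in>{?lo..?hi}. A i s t x * B (k - i) (s + of_int i * h) t x)"
    by (rule op_mult_int[of "ub A" _ "ub B"]) (use ub[OF A] ub[OF B] in auto)
  moreover have "op_mult h A C k s t x = (\<Sum>i\<in>{?lo..?hi}. A i s t x * C (k - i) (s + of_int i * h) t x)"
    by (rule op_mult_int[of "ub A" _ "ub C"]) (use ub[OF A] ub[OF C] in auto)
  ultimately show "op_mult h A (op_sub B C) k s t x = op_sub (op_mult h A B) (op_mult h A C) k s t x"
    by (simp add: op_sub_def right_diff_distrib sum_subtractf)
qed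

lemma mult_scale_left:
  assumes A: "ba A" and B: "ba B"
  shows "op_mult h (op_scale c A) B = op_scale c (op_mult h A B)"
proof (intro ext)
  fix k s t x
  have "op_mult h (op_scale c A) B k s t x = (\<Sum>i\<in>{k - ub B..ub A}. op_scale c A i s t x * B (k - i) (s + of_int i * h) t x)"
    by (rule op_mult_int[of "ub A" _ "ub B"]) (use ub[OF A] ub[OF B] in \<open>auto simp: op_scale_def czero_def\<close>)
  then show "op_mult h (op_scale c A) B k s t x = op_scale c (op_mult h A B) k s t x"
    by (simp add: op_mult_ub[OF A B] op_scale_def sum_distrib_left mult.assoc)
qed

lemma mult_scale_right:
  assumes A: "ba A" and B: "ba B"
  shows "op_mult h A (op_scale c B) = op_scale c (op_mult h A B)"
proof (intro ext)
  fix k s t x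
  have "op_mult h A (op_scale c B) k s t x = (\<Sum>i\<in>{k - ub B..ub A}. A i s t x * op_scale c B (k - i) (s + of_int i * h) t x)"
    by (rule op_mult_int[of "ub A" _ "ub B"]) (use ub[OF A] ub[OF B] in \<open>auto simp: op_scale_def czero_def\<close>)
  then show "op_mult h A (op_scale c B) k s t x = op_scale c (op_mult h A B) k s t x"
    by (simp add: op_mult_ub[OF A B] op_scale_def sum_distrib_left mult.assoc mult.left_commute)
qed

lemma good_mult: "good A \<Longrightarrow> good B \<Longrightarrow> good (op_mult h A B)"
proof -
  assume A: "good A" and B: "good B"
  have "smooth (op_mult h A B k)" for k
  proof -
    have "op_mult h A B k = (\<lambda>s t x. \<Sum>i\<in>{k - ub B..ub A}. A i s t x * B (k - i) (s + of_int i * h) t x)"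
      by (rule op_mult_int_fun) (use ub[OF good_ba[OF A]] ub[OF good_ba[OF B]] in auto)
    moreover have "smooth (\<lambda>s t x. \<Sum>i\<in>{k - ub B..ub A}. A i s t x * B (k - i) (s + of_int i * h) t x)"
      by (intro smooth_sum smooth_mult smooth_shift good_sm[OF A] good_sm[OF B])
    ultimately show ?thesis by simp
  qed
  then show ?thesis using A B by (simp add: good_def ba_mult)
qed

lemma good_add: "good A \<Longrightarrow> good B \<Longrightarrow> good (op_add A B)"
  unfolding good_def by (auto intro: ba_add) (auto simp: op_add_def intro!: smooth_add)
lemma good_sub: "good A \<Longrightarrow> good B \<Longrightarrow> good (op_sub A B)"
  unfolding good_def by (auto intro: ba_sub) (auto simp: op_sub_def intro!: smooth_diff)
lemma good_scale: "good A \<Longrightarrow> good (op_scale c A)"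
  unfolding good_def by (auto intro: ba_scale) (auto simp: op_scale_def intro!: smooth_cmult)
lemma good_partial: "good A \<Longrightarrow> good (op_partial d A)"
  unfolding good_def by (auto intro: ba_partial) (auto simp: op_partial_def intro!: smooth_partial)
lemma good_pos: "good A \<Longrightarrow> good (op_pos A)"
  unfolding good_def by (auto intro: ba_pos) (auto simp: op_pos_def smooth_czero)
lemma good_Lam: "good (Lam n)"
  unfolding good_def by (auto intro: ba_Lam) (auto simp: Lam_def smooth_czero smooth_const)
lemma good_pow: "good A \<Longrightarrow> good (op_pow h A n)"
  by (induction n) (simp_all add: op_pow_def good_Lam good_mult)

lemma op_pow_Suc: "op_pow h A (Suc n) = op_mult h A (op_pow h A n)"
  by (simp add: op_pow_def)
lemma op_pow_0: "op_pow h A 0 = Lam 0"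
  by (simp add: op_pow_def)

lemma nn_mult: "nn A \<Longrightarrow> nn B \<Longrightarrow> nn (op_mult h A B)"
proof -
  assume A: "nn A" and B: "nn B"
  have "op_mult h A B k = czero" if k: "k < 0" for k
  proof -
    have S: "{i. A i \<noteq> czero \<and> B (k - i) \<noteq> czero} = {}"
    proof (rule ccontr)
      assume "{i. A i \<noteq> czero \<and> B (k - i) \<noteq> czero} \<noteq> {}"
      then obtain i where i: "A i \<noteq> czero" "B (k - i) \<noteq> czero" by blast
      have "\<not> i < 0" using i(1) A by (auto simp: nn_def)
      moreover have "\<not> k - i < 0" using i(2) B by (auto simp: nn_def)
      ultimately show False using k by linarith
    qed
    show ?thesis unfolding op_mult_def S by (simp add: czero_def)
  qed
  then show ?thesis by (simp add: nn_def)
qed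

lemma nn_add: "nn A \<Longrightarrow> nn B \<Longrightarrow> nn (op_add A B)"
  by (simp add: nn_def op_add_def czero_def)
lemma nn_sub: "nn A \<Longrightarrow> nn B \<Longrightarrow> nn (op_sub A B)"
  by (simp add: nn_def op_sub_def czero_def)
lemma nn_scale: "nn A \<Longrightarrow> nn (op_scale c A)"
  by (simp add: nn_def op_scale_def czero_def)
lemma nn_partial: "nn A \<Longrightarrow> nn (op_partial d A)"
  by (simp add: nn_def op_partial_def partial_czero)
lemma nn_pos: "nn (op_pos A)"
  by (simp add: nn_def op_pos_def)
lemma nn_Lam: "n \<ge> 0 \<Longrightarrow> nn (Lam n)"
  by (simp add: nn_def Lam_def)
lemma nn_pow: "nn A \<Longrightarrow> nn (op_pow h A n)"
  by (induction n) (simp_all add: op_pow_def nn_Lam nn_mult)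

section \<open>Derivative rules\<close>

lemma partial_op_mult:
  assumes A: "good A" and B: "good B"
  shows "op_partial d (op_mult h A B) = op_add (op_mult h (op_partial d A) B) (op_mult h A (op_partial d B))"
proof (intro ext)
  fix k s t x
  let ?S = "{k - ub B..ub A}"
  have uA: "\<And>i. i > ub A \<Longrightarrow> A i = czero" and uB: "\<And>i. i > ub B \<Longrightarrow> B i = czero"
    using ub[OF good_ba[OF A]] ub[OF good_ba[OF B]] by auto
  have uA': "\<And>i. i > ub A \<Longrightarrow> op_partial d A i = czero" and uB': "\<And>i. i > ub B \<Longrightarrow> op_partial d B i = czero"
    using uA uB by (auto simp: op_partial_def partial_czero)
  have e: "op_mult h A B k = (\<lambda>s t x. \<Sum>i\<in>?S. A i s t x * shiftc (of_int i * h) (B (k - i)) s t x)"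
    unfolding shiftc_def by (rule op_mult_int_fun) (use uA uB in auto)
  have sm: "smooth (\<lambda>s t x. A i s t x * shiftc (of_int i * h) (B (k - i)) s t x)" for i
    unfolding shiftc_def by (intro smooth_mult smooth_shift good_sm[OF A] good_sm[OF B])
  have "partial d (op_mult h A B k) = (\<lambda>s t x. \<Sum>i\<in>?S. partial d (\<lambda>s t x. A i s t x * shiftc (of_int i * h) (B (k - i)) s t x) s t x)"
    unfolding e by (rule partial_sum) (rule sm)
  also have "\<dots> = (\<lambda>s t x. \<Sum>i\<in>?S. partial d (A i) s t x * shiftc (of_int i * h) (B (k - i)) s t x
                      + A i s t x * shiftc (of_int i * h) (partial d (B (k - i))) s t x)"
  proof -
    have "partial d (\<lambda>s t x. A i s t x * shiftc (of_int i * h) (B (k - i)) s t x)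
        = (\<lambda>s t x. partial d (A i) s t x * shiftc (of_int i * h) (B (k - i)) s t x
                      + A i s t x * shiftc (of_int i * h) (partial d (B (k - i))) s t x)" for i
      by (simp add: partial_mult smooth_diffall good_sm[OF A] diffall_shift good_sm[OF B] partial_shift)
    then show ?thesis by simp
  qed
  finally have L: "partial d (op_mult h A B k) s t x = (\<Sum>i\<in>?S. partial d (A i) s t x * shiftc (of_int i * h) (B (k - i)) s t x
                      + A i s t x * shiftc (of_int i * h) (partial d (B (k - i))) s t x)" by simp
  have R1: "op_mult h (op_partial d A) B k s t x = (\<Sum>i\<in>?S. op_partial d A i s t x * shiftc (of_int i * h) (B (k - i)) s t x)"
    unfolding shiftc_def by (rule op_mult_int) (use uA' uB in auto)
  have R2: "op_mult h A (op_partial d B) k s t x = (\<Sum>i\<in>?S. A i s t x * shiftc (of_int i * h) (op_partial d B (k - i)) s t x)"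
    unfolding shiftc_def by (rule op_mult_int) (use uA uB' in auto)
  show "op_partial d (op_mult h A B) k s t x = op_add (op_mult h (op_partial d A) B) (op_mult h A (op_partial d B)) k s t x"
    unfolding op_add_def R1 R2 by (simp add: op_partial_def L sum.distrib)
qed

lemma partial_op_add: "good A \<Longrightarrow> good B \<Longrightarrow> op_partial d (op_add A B) = op_add (op_partial d A) (op_partial d B)"
  unfolding op_partial_def op_add_def by (intro ext) (simp add: partial_add smooth_diffall good_sm)

lemma partial_op_sub: "good A \<Longrightarrow> good B \<Longrightarrow> op_partial d (op_sub A B) = op_sub (op_partial d A) (op_partial d B)"
  unfolding op_partial_def op_sub_def by (intro ext) (simp add: partial_diff smooth_diffall good_sm)

lemma partial_op_scale: "good A \<Longrightarrow> op_partial d (op_scale c A) = op_scale c (op_partial d A)"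
proof -
  assume A: "good A"
  have "partial d (\<lambda>s t x. (\<lambda>s t x. complex_of_real c) s t x * A k s t x) = (\<lambda>s t x. of_real c * partial d (A k) s t x)" for k
    by (subst partial_mult) (auto simp: smooth_diffall good_sm[OF A] smooth_const partial_const)
  then show ?thesis unfolding op_partial_def op_scale_def by (intro ext) simp
qed

lemma partial_Lam: "op_partial d (Lam n) = Z"
  unfolding op_partial_def Lam_def Z_def by (intro ext) (simp add: partial_const partial_czero[unfolded czero_def] czero_def)

lemma mult_Z_left: "op_mult h Z A = Z"
  unfolding op_mult_def Z_def by (intro ext) (simp add: czero_def)
lemma mult_Z_right: "op_mult h A Z = Z"
  unfolding op_mult_def Z_def by (intro ext) (simp add: czero_def)
lemma add_Z_right: "op_add A Z = A"
  unfolding op_add_def Z_def czero_def by simp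
lemma add_Z_left: "op_add Z A = A"
  unfolding op_add_def Z_def czero_def by simp
lemma good_Z: "good Z"
  by (simp add: good_def Z_def bdd_above_op_def smooth_czero)
lemma nn_Z: "nn Z" by (simp add: nn_def Z_def)

lemma partial_mult_Lam: "good A \<Longrightarrow> op_partial d (op_mult h A (Lam n)) = op_mult h (op_partial d A) (Lam n)"
  by (simp add: partial_op_mult good_Lam partial_Lam mult_Z_right add_Z_right)



section \<open>Inverse of a unipotent operator\<close>

definition unip :: "pdo \<Rightarrow> bool" where
  "unip U \<longleftrightarrow> U 0 = (\<lambda>_ _ _. 1) \<and> (\<forall>k>0. U k = czero) \<and> (\<forall>k. smooth (U k))"

function rinv :: "real \<Rightarrow> pdo \<Rightarrow> nat \<Rightarrow> coef" where
  "rinv h U n = (if n = 0 then (\<lambda>_ _ _. 1) else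
     (\<lambda>s t x. - (\<Sum>i\<in>{1..n}. U (- int i) s t x * rinv h U (n - i) (s - real i * h) t x)))"
  by auto
termination by (relation "Wellfounded.measure (\<lambda>(h, U, n). n)") auto

declare rinv.simps[simp del]

definition rinvop :: "real \<Rightarrow> pdo \<Rightarrow> pdo" where
  "rinvop h U = (\<lambda>k. if k \<le> 0 then rinv h U (nat (- k)) else czero)"

lemma smooth_shift': "smooth f \<Longrightarrow> smooth (\<lambda>s t x. f (s - c) t x)"
  using smooth_shift[of f "- c"] by simp

lemma rinv_smooth: "unip U \<Longrightarrow> smooth (rinv h U n)"
proof (induction n rule: less_induct)
  case (less n)
  show ?case
  proof (cases "n = 0")
    case True then show ?thesis by (subst rinv.simps) (simp add: smooth_const)
  next
    case False
    have "smooth (\<lambda>s t x. - (\<Sum>i\<in>{1..n}. U (- int i) s t x * rinv h U (n - i) (s - real i * h) t x))"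
      by (intro smooth_neg smooth_sum smooth_mult smooth_shift' less.IH) (use less.prems False in \<open>auto simp: unip_def\<close>)
    then show ?thesis using False by (subst rinv.simps) simp
  qed
qed

lemma sum_neg_reindex: "(\<Sum>i\<in>{- int n..0}. f i) = (\<Sum>j\<in>{0..n}. f (- int j))"
  by (rule sum.reindex_bij_witness[of _ "\<lambda>j. - int j" "\<lambda>i. nat (- i)"]) auto

lemma unip_ba: "unip U \<Longrightarrow> ba U"
  unfolding unip_def bdd_above_op_def by blast

lemma rinvop_unip: "unip U \<Longrightarrow> unip (rinvop h U)"
proof -
  assume U: "unip U"
  have "rinvop h U 0 = (\<lambda>_ _ _. 1)" by (simp add: rinvop_def rinv.simps[of h U 0])
  moreover have "\<forall>k>0. rinvop h U k = czero" by (simp add: rinvop_def)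
  moreover have "\<forall>k. smooth (rinvop h U k)" using U by (simp add: rinvop_def rinv_smooth smooth_czero)
  ultimately show ?thesis by (simp add: unip_def)
qed

lemma rinvop_right:
  assumes U: "unip U"
  shows "op_mult h U (rinvop h U) = Lam 0"
proof (intro ext)
  fix k s t x
  let ?V = "rinvop h U"
  have uU: "\<And>i. i > 0 \<Longrightarrow> U i = czero" using U by (auto simp: unip_def)
  have uV: "\<And>i. i > 0 \<Longrightarrow> ?V i = czero" by (auto simp: rinvop_def)
  show "op_mult h U ?V k s t x = Lam 0 k s t x"
  proof (cases "k > 0")
    case True
    have "op_mult h U ?V k s t x = (\<Sum>i\<in>{k..0}. U i s t x * ?V (k - i) (s + of_int i * h) t x)"
      by (rule op_mult_int[of 0 _ 0]) (use uU uV in auto)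
    then show ?thesis using True by (simp add: Lam_def czero_def)
  next
    case False
    then obtain n where n: "k = - int n" by (metis minus_minus nat_0_le neg_0_le_iff_le not_less)
    have "op_mult h U ?V k s t x = (\<Sum>i\<in>{- int n..0}. U i s t x * ?V (k - i) (s + of_int i * h) t x)"
      by (rule op_mult_int[of 0 _ 0]) (use uU uV n in auto)
    also have "\<dots> = (\<Sum>j\<in>{0..n}. U (- int j) s t x * rinv h U (n - j) (s - real j * h) t x)"
      unfolding sum_neg_reindex
    proof (rule sum.cong)
      fix j assume "j \<in> {0..n}"
      then have "nat (- (k - - int j)) = n - j" "k - - int j \<le> 0" using n by auto
      then show "U (- int j) s t x * ?V (k - - int j) (s + of_int (- int j) * h) t x =
           U (- int j) s t x * rinv h U (n - j) (s - real j * h) t x"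
        by (simp add: rinvop_def)
    qed simp
    also have "\<dots> = U 0 s t x * rinv h U n s t x + (\<Sum>j\<in>{1..n}. U (- int j) s t x * rinv h U (n - j) (s - real j * h) t x)"
      by (simp add: sum.atLeast_Suc_atMost)
    also have "\<dots> = Lam 0 k s t x"
    proof (cases "n = 0")
      case True then show ?thesis using U n by (simp add: unip_def Lam_def rinv.simps[of h U 0])
    next
      case False then show ?thesis using U n by (simp add: unip_def Lam_def rinv.simps[of h U n] czero_def)
    qed
    finally show ?thesis .
  qed
qed

lemma inverse_unique:
  assumes "ba U" "ba V" "ba B" "op_mult h U V = Lam 0" "op_mult h B U = Lam 0"
  shows "B = V"
proof -
  have "B = op_mult h B (op_mult h U V)" using assms(4) by (simp add: mult_Lam0_right)
  also have "\<dots> = op_mult h (op_mult h B U) V" by (rule op_mult_assoc[symmetric]) (use assms in auto)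
  also have "\<dots> = V" using assms(5) by (simp add: mult_Lam0_left)
  finally show ?thesis .
qed

lemma rinvop_left:
  assumes U: "unip U"
  shows "op_mult h (rinvop h U) U = Lam 0"
proof -
  let ?V = "rinvop h U"
  have V: "unip ?V" by (rule rinvop_unip[OF U])
  have "U = rinvop h ?V"
    by (rule inverse_unique[where U = ?V and V = "rinvop h ?V" and B = U and h = h])
       (auto intro: unip_ba U V rinvop_unip simp: rinvop_right[OF U] rinvop_right[OF V])
  then have e: "rinvop h ?V = U" by simp
  have "op_mult h ?V (rinvop h ?V) = Lam 0" by (rule rinvop_right[OF V])
  then show ?thesis unfolding e .
qed

lemma unip_good: "unip U \<Longrightarrow> good U"
  by (simp add: good_def unip_ba) (simp add: unip_def)

lemma inv_above_eq:
  assumes U: "unip U"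
  shows "inv_above h U = rinvop h U"
  unfolding inv_above_def
proof (rule the_equality)
  show "ba (rinvop h U) \<and> op_mult h U (rinvop h U) = Lam 0 \<and> op_mult h (rinvop h U) U = Lam 0"
    using U by (simp add: unip_ba rinvop_unip rinvop_right rinvop_left)
  fix B assume "ba B \<and> op_mult h U B = Lam 0 \<and> op_mult h B U = Lam 0"
  then show "B = rinvop h U"
    using inverse_unique[where U = U and V = "rinvop h U" and B = B and h = h] U by (simp add: unip_ba rinvop_unip rinvop_right)
qed

section \<open>Adjoint\<close>

lemma adj_czero_iff: "adj h A k = czero \<longleftrightarrow> A (- k) = czero"
proof
  assume a: "adj h A k = czero"
  show "A (- k) = czero"
  proof (intro ext)
    fix s t x
    have "adj h A k (s - of_int k * h) t x = 0" using a by (simp add: czero_def)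
    then show "A (- k) s t x = czero s t x" by (simp add: adj_def czero_def)
  qed
qed (simp add: adj_def czero_def)

lemma adj_mult: "adj h (op_mult h A B) = op_mult h (adj h B) (adj h A)"
proof (intro ext)
  fix k s t x
  have "adj h (op_mult h A B) k s t x
      = (\<Sum>i\<in>{i. A i \<noteq> czero \<and> B (- k - i) \<noteq> czero}. A i (s + of_int k * h) t x * B (- k - i) (s + of_int k * h + of_int i * h) t x)"
    by (simp add: adj_def op_mult_def)
  also have "\<dots> = (\<Sum>j\<in>{j. adj h B j \<noteq> czero \<and> adj h A (k - j) \<noteq> czero}. adj h B j s t x * adj h A (k - j) (s + of_int j * h) t x)"
  proof (rule sum.reindex_bij_witness[of _ "\<lambda>j. j - k" "\<lambda>i. i + k"])
    fix i assume "i \<in> {i. A i \<noteq> czero \<and> B (- k - i) \<noteq> czero}"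
    then have a: "A i \<noteq> czero" "B (- k - i) \<noteq> czero" by auto
    have e: "- (i + k) = - k - i" "- (k - (i + k)) = i" by simp_all
    show "i + k \<in> {j. adj h B j \<noteq> czero \<and> adj h A (k - j) \<noteq> czero}"
      unfolding mem_Collect_eq adj_czero_iff e using a by blast
  next
    fix j assume "j \<in> {j. adj h B j \<noteq> czero \<and> adj h A (k - j) \<noteq> czero}"
    then show "j - k \<in> {i. A i \<noteq> czero \<and> B (- k - i) \<noteq> czero}"
      by (simp add: adj_czero_iff)
  next
    fix i
    show "adj h B (i + k) s t x * adj h A (k - (i + k)) (s + of_int (i + k) * h) t x =
          A i (s + of_int k * h) t x * B (- k - i) (s + of_int k * h + of_int i * h) t x"
    proof -
      have e: "- i - k = - k - i" by simp
      show ?thesis by (simp add: adj_def algebra_simps) (metis e)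
    qed
  qed auto
  also have "\<dots> = op_mult h (adj h B) (adj h A) k s t x"
    by (simp add: op_mult_def)
  finally show "adj h (op_mult h A B) k s t x = op_mult h (adj h B) (adj h A) k s t x" .
qed

lemma adj_adj: "adj h (adj h A) = A"
  by (intro ext) (simp add: adj_def algebra_simps)

lemma adj_Lam0: "adj h (Lam 0) = Lam 0"
  by (intro ext) (simp add: adj_def Lam_def czero_def)

lemma bb_adj: "ba A \<Longrightarrow> bdd_below_op (adj h A)"
proof -
  assume A: "ba A"
  have "\<forall>k < - ub A. adj h A k = czero" using ub[OF A] by (auto simp: adj_czero_iff)
  then show ?thesis unfolding bdd_below_op_def by blast
qed

lemma ba_adj: "bdd_below_op B \<Longrightarrow> ba (adj h B)"
proof -
  assume "bdd_below_op B"
  then obtain M where M: "\<forall>k<M. B k = czero" unfolding bdd_below_op_def by blast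
  have "\<forall>k > - M. adj h B k = czero" using M by (auto simp: adj_czero_iff)
  then show ?thesis unfolding bdd_above_op_def by blast
qed

lemma inv_below_adj:
  assumes U: "unip U"
  shows "inv_below h (adj h U) = adj h (rinvop h U)"
  unfolding inv_below_def
proof (rule the_equality)
  let ?V = "rinvop h U"
  show "bdd_below_op (adj h ?V) \<and> op_mult h (adj h U) (adj h ?V) = Lam 0 \<and> op_mult h (adj h ?V) (adj h U) = Lam 0"
    using U by (simp add: bb_adj unip_ba rinvop_unip adj_mult[symmetric] rinvop_right rinvop_left adj_Lam0)
  fix B assume B: "bdd_below_op B \<and> op_mult h (adj h U) B = Lam 0 \<and> op_mult h B (adj h U) = Lam 0"
  have 1: "op_mult h U (adj h B) = Lam 0"
  proof -
    have "op_mult h U (adj h B) = adj h (op_mult h B (adj h U))"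
      by (simp add: adj_mult adj_adj)
    then show ?thesis using B by (simp add: adj_Lam0)
  qed
  have 2: "op_mult h (adj h B) U = Lam 0"
  proof -
    have "op_mult h (adj h B) U = adj h (op_mult h (adj h U) B)"
      by (simp add: adj_mult adj_adj)
    then show ?thesis using B by (simp add: adj_Lam0)
  qed
  have "adj h B = ?V"
    by (rule inverse_unique[where U = U and h = h]) (use U B 1 2 in \<open>auto simp: unip_ba rinvop_unip ba_adj rinvop_right\<close>)
  then show "B = adj h ?V" by (metis adj_adj)
qed

definition dser :: "real \<Rightarrow> pdo \<Rightarrow> int \<Rightarrow> coef" where
  "dser h U = (\<lambda>j s t x. U j (s - (of_int j + 1) * h) t x)"

lemma dual_wave_eq:
  assumes U: "unip W"
  shows "dual_wave_series h W = dser h (rinvop h W)"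
proof (intro ext)
  fix j s t x
  show "dual_wave_series h W j s t x = dser h (rinvop h W) j s t x"
    unfolding dual_wave_series_def dual_coeffs_def mult_Lam_right inv_below_adj[OF U]
    by (simp add: mult_Lam_left adj_def dser_def algebra_simps)
qed



lemma fold_inv:
  assumes "\<forall>k\<in>set ks. P k" "\<And>k x. P k \<Longrightarrow> I x \<Longrightarrow> I (f k x)" "I x"
  shows "I (fold f ks x)"
  using assms by (induction ks arbitrary: x) auto

lemma d_alpha_op: "d_alpha N k F = op_sub (op_partial (DX k) F) (op_mult h (op_partial DS F) (Lam (int (N * k))))"
  by (intro ext) (simp add: d_alpha_def op_sub_def op_partial_def mult_Lam_right)

lemma scale_inv: "h \<noteq> 0 \<Longrightarrow> op_scale h X = Y \<Longrightarrow> X = op_scale (1 / h) Y"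
  by (auto simp: op_scale_def intro!: ext)

lemma add_eq_Z: "op_add X Y = Z \<Longrightarrow> X = op_scale (-1) Y"
proof (intro ext)
  fix k s t x assume "op_add X Y = Z"
  then have "op_add X Y k s t x = Z k s t x" by simp
  then show "X k s t x = op_scale (-1) Y k s t x"
    by (simp add: op_add_def Z_def czero_def op_scale_def add_eq_0_iff)
qed

lemmas gdI = good_mult good_add good_sub good_scale good_partial good_pos good_Lam good_pow good_Z good_ba

lemma partial_shift_minus: "partial d (\<lambda>s t x. f (s - c) t x) = (\<lambda>s t x. partial d f (s - c) t x)"
  using partial_shift[of d "- c" f] by (simp add: shiftc_def)

lemma dser_dy: "d_y h k (dser h U) = dser h (op_sub (op_partial (DT k) U) (op_scale (1 / h) (op_mult h (Lam (int k)) U)))"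
proof (intro ext)
  fix j s t x
  have e: "s - (real_of_int (j - int k) + 1) * h = s - (real_of_int j + 1) * h + real k * h"
    by (simp add: algebra_simps)
  show "d_y h k (dser h U) j s t x = dser h (op_sub (op_partial (DT k) U) (op_scale (1 / h) (op_mult h (Lam (int k)) U))) j s t x"
    unfolding d_y_def dser_def partial_shift_minus
    by (simp add: op_sub_def op_scale_def op_partial_def mult_Lam_left algebra_simps)
qed

lemma dser_dalpha: "d_alpha N k (dser h U) = dser h (op_sub (op_partial (DX k) U) (op_mult h (Lam (int (N * k))) (op_partial DS U)))"
proof (intro ext)
  fix j s t x
  have e: "s - (real_of_int (j - int (N * k)) + 1) * h = s - (real_of_int j + 1) * h + real (N * k) * h"
    by (simp add: algebra_simps)
  show "d_alpha N k (dser h U) j s t x = dser h (op_sub (op_partial (DX k) U) (op_mult h (Lam (int (N * k))) (op_partial DS U))) j s t x"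
    unfolding d_alpha_def dser_def partial_shift_minus
    by (simp add: op_sub_def op_partial_def mult_Lam_left algebra_simps)
qed

lemma residue:
  assumes A: "good A" and U: "good U" and s': "s' = s - real l * h" and n: "n \<ge> 0"
  shows "res_prod (n + int l) (\<lambda>j. A j s t x) (\<lambda>j. dser h U j s' t x)
       = op_mult h (op_mult h A (Lam n)) U (- 1 - int l) s t x"
proof -
  let ?c = "n + int l"
  define g where "g i = A i s t x * dser h U (- 1 - ?c - i) s' t x" for i
  have "res_prod ?c (\<lambda>j. A j s t x) (\<lambda>j. dser h U j s' t x)
      = (\<Sum>i\<in>{i. A i s t x \<noteq> 0 \<and> dser h U (- 1 - ?c - i) s' t x \<noteq> 0}. g i)"
    by (simp add: res_prod_def g_def)
  also have "\<dots> = Sum_any g"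
  proof (rule Sum_any.expand_superset[symmetric])
    show "finite {i. A i s t x \<noteq> 0 \<and> dser h U (- 1 - ?c - i) s' t x \<noteq> 0}"
    proof (rule finite_subset)
      show "{i. A i s t x \<noteq> 0 \<and> dser h U (- 1 - ?c - i) s' t x \<noteq> 0} \<subseteq> {- 1 - ?c - ub U..ub A}"
      proof
        fix i assume "i \<in> {i. A i s t x \<noteq> 0 \<and> dser h U (- 1 - ?c - i) s' t x \<noteq> 0}"
        then have "A i s t x \<noteq> 0" "U (- 1 - ?c - i) (s' - (of_int (- 1 - ?c - i) + 1) * h) t x \<noteq> 0"
          by (auto simp: dser_def)
        then have "i \<le> ub A" "- 1 - ?c - i \<le> ub U"
          using nz_le_ub[OF good_ba[OF A]] nz_le_ub[OF good_ba[OF U]] by blast+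
        then show "i \<in> {- 1 - ?c - ub U..ub A}" by simp
      qed
    qed simp
    show "{a. g a \<noteq> 0} \<subseteq> {i. A i s t x \<noteq> 0 \<and> dser h U (- 1 - ?c - i) s' t x \<noteq> 0}"
      by (auto simp: g_def)
  qed
  also have "\<dots> = Sum_any (\<lambda>j. A (j - n) s t x * U (- 1 - int l - j) (s + of_int j * h) t x)"
  proof (rule Sum_any.reindex_cong[of "\<lambda>j. j - n"])
    show "bij (\<lambda>j. j - n)" using bij_plus_right[of "- n"] by simp
    show "g \<circ> (\<lambda>j. j - n) = (\<lambda>j. A (j - n) s t x * U (- 1 - int l - j) (s + of_int j * h) t x)"
    proof (intro ext)
      fix j
      show "(g \<circ> (\<lambda>j. j - n)) j = A (j - n) s t x * U (- 1 - int l - j) (s + of_int j * h) t x"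
        by (simp add: g_def dser_def s' algebra_simps)
    qed
  qed
  also have "\<dots> = op_mult h (op_mult h A (Lam n)) U (- 1 - int l) s t x"
    by (subst op_mult_any) (auto simp: mult_Lam_right intro: ba_mult good_ba A U ba_Lam)
  finally show ?thesis .
qed



context
  fixes h :: real and N :: nat and W :: pdo
  assumes hne: "h \<noteq> 0" and sol: "lattice_GD_solution h N W"
begin

abbreviation "V \<equiv> rinvop h W"
abbreviation "L \<equiv> GD_L h N W"
abbreviation "Lk k \<equiv> op_pow h L k"
abbreviation "Bk k \<equiv> GD_B h k W"
abbreviation "Pk k \<equiv> GD_P h N k W"

lemma unipW: "unip W"
  using sol unfolding lattice_GD_solution_def dressing_op_def unip_def by blast

lemma gW: "good W" by (rule unip_good[OF unipW])
lemma gV: "good V" by (rule unip_good[OF rinvop_unip[OF unipW]])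
lemma WV: "op_mult h W V = Lam 0" by (rule rinvop_right[OF unipW])
lemma VW: "op_mult h V W = Lam 0" by (rule rinvop_left[OF unipW])
lemma invW: "inv_above h W = V" by (rule inv_above_eq[OF unipW])

lemma Ldef: "L = op_mult h (op_mult h W (Lam (int N))) V"
  by (simp add: GD_L_def invW)

lemma gL: "good L" unfolding Ldef by (intro good_mult gW gV good_Lam)
lemma nnL: "nn L" using sol unfolding lattice_GD_solution_def nn_def by blast
lemma gLk: "good (Lk k)" by (rule good_pow[OF gL])
lemma nnLk: "nn (Lk k)" by (rule nn_pow[OF nnL])

lemma gB: "good (Bk k)" unfolding GD_B_def invW by (intro good_pos good_mult gW gV good_Lam)
lemma nnB: "nn (Bk k)" unfolding GD_B_def by (rule nn_pos)
lemma gP: "good (Pk k)" unfolding GD_P_def invW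
  by (intro good_scale good_pos good_mult gW gV gLk good_partial)
lemma nnP: "nn (Pk k)" unfolding GD_P_def by (intro nn_scale nn_pos)

lemmas G = gW gV gL gLk gB gP

lemma LW: "op_mult h L W = op_mult h W (Lam (int N))"
proof -
  have "op_mult h L W = op_mult h (op_mult h W (Lam (int N))) (op_mult h V W)"
    unfolding Ldef by (rule op_mult_assoc) (auto intro!: gdI G)
  then show ?thesis by (simp add: VW mult_Lam0_right)
qed

lemma LkW: "op_mult h (Lk k) W = op_mult h W (Lam (int (N * k)))"
proof (induction k)
  case 0 then show ?case by (simp add: op_pow_0 mult_Lam0_left mult_Lam0_right)
next
  case (Suc k)
  have "op_mult h (Lk (Suc k)) W = op_mult h L (op_mult h (Lk k) W)"
    unfolding op_pow_Suc by (rule op_mult_assoc) (auto intro!: gdI G)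
  also have "\<dots> = op_mult h L (op_mult h W (Lam (int (N * k))))" using Suc by simp
  also have "\<dots> = op_mult h (op_mult h L W) (Lam (int (N * k)))"
    by (rule op_mult_assoc[symmetric]) (auto intro!: gdI G)
  also have "\<dots> = op_mult h W (op_mult h (Lam (int N)) (Lam (int (N * k))))"
    unfolding LW by (rule op_mult_assoc) (auto intro!: gdI G)
  also have "\<dots> = op_mult h W (Lam (int (N * Suc k)))" by (simp add: Lam_Lam)
  finally show ?case .
qed

lemma VLk: "op_mult h V (Lk k) = op_mult h (Lam (int (N * k))) V"
proof -
  have "op_mult h (Lam (int (N * k))) V = op_mult h (op_mult h (op_mult h V W) (Lam (int (N * k)))) V"
    by (simp add: VW mult_Lam0_left)
  also have "\<dots> = op_mult h (op_mult h V (op_mult h W (Lam (int (N * k))))) V"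
    by (subst op_mult_assoc) (auto intro!: gdI G)
  also have "\<dots> = op_mult h (op_mult h V (op_mult h (Lk k) W)) V" by (simp add: LkW)
  also have "\<dots> = op_mult h (op_mult h (op_mult h V (Lk k)) W) V"
    by (subst op_mult_assoc) (auto intro!: gdI G)
  also have "\<dots> = op_mult h (op_mult h V (Lk k)) (op_mult h W V)"
    by (rule op_mult_assoc) (auto intro!: gdI G)
  also have "\<dots> = op_mult h V (Lk k)" by (simp add: WV mult_Lam0_right)
  finally show ?thesis ..
qed

lemma Wt: "k \<ge> 1 \<Longrightarrow> op_partial (DT k) W = op_scale (1 / h) (op_sub (op_mult h (Bk k) W) (op_mult h W (Lam (int k))))"
  using sol hne unfolding lattice_GD_solution_def by (intro scale_inv) auto

lemma Wx: "k \<ge> 1 \<Longrightarrow> op_partial (DX k) W = op_add (op_mult h (Lk k) (op_partial DS W)) (op_scale (1 / h) (op_mult h (Pk k) W))"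
proof -
  assume k: "k \<ge> 1"
  have "op_partial (DX k) W = op_scale (1 / h) (op_add (op_mult h (Lk k) (op_scale h (op_partial DS W))) (op_mult h (Pk k) W))"
    using sol hne k unfolding lattice_GD_solution_def by (intro scale_inv) auto
  also have "op_mult h (Lk k) (op_scale h (op_partial DS W)) = op_scale h (op_mult h (Lk k) (op_partial DS W))"
    by (rule mult_scale_right) (auto intro!: gdI G)
  finally show ?thesis using hne by (auto simp: op_scale_def op_add_def intro!: ext simp: field_simps)
qed

lemma dV: "op_partial d V = op_scale (-1) (op_mult h (op_mult h V (op_partial d W)) V)"
proof -
  have "op_add (op_mult h (op_partial d V) W) (op_mult h V (op_partial d W)) = op_partial d (op_mult h V W)"
    by (rule partial_op_mult[symmetric]) (auto intro!: gdI G)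
  also have "\<dots> = Z" by (simp add: VW partial_Lam)
  finally have 1: "op_mult h (op_partial d V) W = op_scale (-1) (op_mult h V (op_partial d W))"
    by (rule add_eq_Z)
  have "op_partial d V = op_mult h (op_partial d V) (op_mult h W V)" by (simp add: WV mult_Lam0_right)
  also have "\<dots> = op_mult h (op_mult h (op_partial d V) W) V"
    by (rule op_mult_assoc[symmetric]) (auto intro!: gdI G)
  also have "\<dots> = op_scale (-1) (op_mult h (op_mult h V (op_partial d W)) V)"
    unfolding 1 by (rule mult_scale_left) (auto intro!: gdI G)
  finally show ?thesis .
qed


lemma wave_step:
  assumes k: "k \<ge> 1" and gQ: "good Q" and nQ: "nn Q"
  shows "\<exists>Q'. good Q' \<and> nn Q' \<and> d_alpha N k (op_mult h Q W) = op_mult h Q' W"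
proof -
  define Ws where "Ws = op_partial DS W"
  define Qx where "Qx = op_partial (DX k) Q"
  define Qs where "Qs = op_partial DS Q"
  define Lks where "Lks = op_partial DS (Lk k)"
  define La where "La = Lam (int (N * k))"
  define P where "P = Pk k"
  define LL where "LL = Lk k"
  have g: "good Ws" "good Qx" "good Qs" "good Lks" "good La" "good P" "good LL" "good Q" "good W"
    unfolding Ws_def Qx_def Qs_def Lks_def La_def P_def LL_def by (auto intro!: gdI G gQ)
  define Q' where "Q' = op_sub (op_sub (op_add Qx (op_scale (1 / h) (op_mult h Q P))) (op_mult h Qs LL)) (op_mult h Q Lks)"
  have gQ': "good Q'" unfolding Q'_def by (auto intro!: gdI g)
  have nQ': "nn Q'" unfolding Q'_def Qx_def Qs_def Lks_def P_def LL_def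
    by (intro nn_sub nn_add nn_scale nn_mult nn_partial nQ nnP nnLk)
  have e1: "op_partial (DX k) (op_mult h Q W) = op_add (op_mult h Qx W) (op_add (op_mult h Q (op_mult h LL Ws)) (op_scale (1 / h) (op_mult h Q (op_mult h P W))))"
  proof -
    have "op_partial (DX k) (op_mult h Q W) = op_add (op_mult h Qx W) (op_mult h Q (op_partial (DX k) W))"
      unfolding Qx_def by (rule partial_op_mult) (auto intro!: g)
    also have "op_partial (DX k) W = op_add (op_mult h LL Ws) (op_scale (1 / h) (op_mult h P W))"
      unfolding LL_def Ws_def P_def by (rule Wx[OF k])
    also have "op_mult h Q (op_add (op_mult h LL Ws) (op_scale (1 / h) (op_mult h P W)))
       = op_add (op_mult h Q (op_mult h LL Ws)) (op_mult h Q (op_scale (1 / h) (op_mult h P W)))"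
      by (rule mult_add_right) (auto intro!: gdI g)
    also have "op_mult h Q (op_scale (1 / h) (op_mult h P W)) = op_scale (1 / h) (op_mult h Q (op_mult h P W))"
      by (rule mult_scale_right) (auto intro!: gdI g)
    finally show ?thesis .
  qed
  have e2: "op_mult h (op_partial DS (op_mult h Q W)) La = op_add (op_mult h Qs (op_mult h LL W)) (op_add (op_mult h Q (op_mult h Lks W)) (op_mult h Q (op_mult h LL Ws)))"
  proof -
    have "op_partial DS (op_mult h Q W) = op_add (op_mult h Qs W) (op_mult h Q Ws)"
      unfolding Qs_def Ws_def by (rule partial_op_mult) (auto intro!: g)
    then have "op_mult h (op_partial DS (op_mult h Q W)) La = op_add (op_mult h (op_mult h Qs W) La) (op_mult h (op_mult h Q Ws) La)"
      by (simp only:) (rule mult_add_left; auto intro!: gdI g)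
    also have "op_mult h (op_mult h Qs W) La = op_mult h Qs (op_mult h LL W)"
    proof -
      have "op_mult h (op_mult h Qs W) La = op_mult h Qs (op_mult h W La)"
        by (rule op_mult_assoc) (auto intro!: gdI g)
      then show ?thesis unfolding La_def LL_def LkW .
    qed
    also have "op_mult h (op_mult h Q Ws) La = op_add (op_mult h Q (op_mult h Lks W)) (op_mult h Q (op_mult h LL Ws))"
    proof -
      have "op_mult h (op_mult h Q Ws) La = op_mult h Q (op_mult h Ws La)"
        by (rule op_mult_assoc) (auto intro!: gdI g)
      also have "op_mult h Ws La = op_partial DS (op_mult h W La)"
        unfolding Ws_def La_def by (rule partial_mult_Lam[symmetric]) (rule gW)
      also have "\<dots> = op_partial DS (op_mult h LL W)" unfolding La_def LL_def LkW ..
      also have "\<dots> = op_add (op_mult h Lks W) (op_mult h LL Ws)"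
        unfolding Lks_def Ws_def LL_def by (rule partial_op_mult) (auto intro!: G)
      also have "op_mult h Q (op_add (op_mult h Lks W) (op_mult h LL Ws)) = op_add (op_mult h Q (op_mult h Lks W)) (op_mult h Q (op_mult h LL Ws))"
        by (rule mult_add_right) (auto intro!: gdI g)
      finally show ?thesis .
    qed
    finally show ?thesis .
  qed
  have e3: "op_mult h Q' W = op_sub (op_sub (op_add (op_mult h Qx W) (op_scale (1 / h) (op_mult h Q (op_mult h P W)))) (op_mult h Qs (op_mult h LL W))) (op_mult h Q (op_mult h Lks W))"
  proof -
    have a1: "op_mult h Q' W = op_sub (op_sub (op_add (op_mult h Qx W) (op_scale (1 / h) (op_mult h (op_mult h Q P) W))) (op_mult h (op_mult h Qs LL) W)) (op_mult h (op_mult h Q Lks) W)"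
      unfolding Q'_def
      by (subst mult_sub_left mult_add_left mult_scale_left, (auto intro!: gdI g)[3])+ (rule refl)?
    have a2: "op_mult h (op_mult h Q P) W = op_mult h Q (op_mult h P W)"
      by (rule op_mult_assoc) (auto intro!: gdI g)
    have a3: "op_mult h (op_mult h Qs LL) W = op_mult h Qs (op_mult h LL W)"
      by (rule op_mult_assoc) (auto intro!: gdI g)
    have a4: "op_mult h (op_mult h Q Lks) W = op_mult h Q (op_mult h Lks W)"
      by (rule op_mult_assoc) (auto intro!: gdI g)
    show ?thesis unfolding a1 a2 a3 a4 ..
  qed
  have "d_alpha N k (op_mult h Q W) = op_mult h Q' W"
    unfolding d_alpha_op[where h = h] e1 La_def[symmetric] e2 e3
    by (intro ext) (simp add: op_sub_def op_add_def op_scale_def algebra_simps)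
  then show ?thesis using gQ' nQ' by blast
qed


lemma sandwich: "good X \<Longrightarrow> op_mult h (op_mult h V (op_mult h X W)) V = op_mult h V X"
proof -
  assume gX: "good X"
  have "op_mult h (op_mult h V (op_mult h X W)) V = op_mult h V (op_mult h (op_mult h X W) V)"
    by (rule op_mult_assoc) (auto intro!: gdI G gX)
  also have "op_mult h (op_mult h X W) V = op_mult h X (op_mult h W V)"
    by (rule op_mult_assoc) (auto intro!: gdI G gX)
  finally show ?thesis by (simp add: WV mult_Lam0_right)
qed

lemma dual_y_step:
  assumes k: "k \<ge> 1" and gR: "good R" and nR: "nn R"
  shows "\<exists>R'. good R' \<and> nn R' \<and> d_y h k (dser h (op_mult h V R)) = dser h (op_mult h V R')"
proof -
  define Rt where "Rt = op_partial (DT k) R"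
  define Vt where "Vt = op_partial (DT k) V"
  define Wt where "Wt = op_partial (DT k) W"
  define B where "B = Bk k"
  define La where "La = Lam (int k)"
  have g: "good Rt" "good Vt" "good Wt" "good B" "good La" "good R" "good V" "good W"
    unfolding Rt_def Vt_def Wt_def B_def La_def by (auto intro!: gdI G gR)
  define R' where "R' = op_sub Rt (op_scale (1 / h) (op_mult h B R))"
  have gR': "good R'" unfolding R'_def by (auto intro!: gdI g)
  have nR': "nn R'" unfolding R'_def Rt_def B_def by (intro nn_sub nn_scale nn_mult nn_partial nR nnB)
  have f1: "op_partial (DT k) (op_mult h V R) = op_add (op_mult h Vt R) (op_mult h V Rt)"
    unfolding Vt_def Rt_def by (rule partial_op_mult) (auto intro!: g)
  have f2: "Vt = op_scale (-1) (op_scale (1 / h) (op_sub (op_mult h V B) (op_mult h La V)))"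
  proof -
    have "Vt = op_scale (-1) (op_mult h (op_mult h V Wt) V)" unfolding Vt_def Wt_def by (rule dV)
    also have "Wt = op_scale (1 / h) (op_sub (op_mult h B W) (op_mult h W La))"
      unfolding Wt_def B_def La_def by (rule Wt[OF k])
    also have "op_mult h V (op_scale (1 / h) (op_sub (op_mult h B W) (op_mult h W La)))
        = op_scale (1 / h) (op_sub (op_mult h V (op_mult h B W)) (op_mult h V (op_mult h W La)))"
      by (subst mult_scale_right mult_sub_right, (auto intro!: gdI g)[3])+ (rule refl)?
    also have "op_mult h (op_scale (1 / h) (op_sub (op_mult h V (op_mult h B W)) (op_mult h V (op_mult h W La)))) V
        = op_scale (1 / h) (op_sub (op_mult h (op_mult h V (op_mult h B W)) V) (op_mult h (op_mult h V (op_mult h W La)) V))"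
      by (subst mult_scale_left mult_sub_left, (auto intro!: gdI g)[3])+ (rule refl)?
    also have "op_mult h (op_mult h V (op_mult h B W)) V = op_mult h V B"
      by (rule sandwich) (rule g)
    also have "op_mult h (op_mult h V (op_mult h W La)) V = op_mult h La V"
    proof -
      have "op_mult h V (op_mult h W La) = op_mult h (op_mult h V W) La"
        by (rule op_mult_assoc[symmetric]) (auto intro!: gdI g)
      then show ?thesis by (simp add: VW mult_Lam0_left)
    qed
    finally show ?thesis .
  qed
  have f3: "op_mult h Vt R = op_scale (-1) (op_scale (1 / h) (op_sub (op_mult h V (op_mult h B R)) (op_mult h La (op_mult h V R))))"
  proof -
    have "op_mult h Vt R = op_scale (-1) (op_scale (1 / h) (op_sub (op_mult h (op_mult h V B) R) (op_mult h (op_mult h La V) R)))"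
      unfolding f2 by (subst mult_scale_left mult_sub_left, (auto intro!: gdI g)[3])+ (rule refl)?
    also have "op_mult h (op_mult h V B) R = op_mult h V (op_mult h B R)"
      by (rule op_mult_assoc) (auto intro!: gdI g)
    also have "op_mult h (op_mult h La V) R = op_mult h La (op_mult h V R)"
      by (rule op_mult_assoc) (auto intro!: gdI g)
    finally show ?thesis .
  qed
  have f4: "op_mult h V R' = op_sub (op_mult h V Rt) (op_scale (1 / h) (op_mult h V (op_mult h B R)))"
    unfolding R'_def by (subst mult_scale_right mult_sub_right, (auto intro!: gdI g)[3])+ (rule refl)?
  have "d_y h k (dser h (op_mult h V R)) = dser h (op_mult h V R')"
    unfolding dser_dy f1 f3 f4 La_def[symmetric] Rt_def[symmetric]
    by (rule arg_cong[where f = "dser h"]) (intro ext, simp add: op_sub_def op_add_def op_scale_def algebra_simps)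
  then show ?thesis using gR' nR' by blast
qed

lemma dual_alpha_step:
  assumes k: "k \<ge> 1" and gR: "good R" and nR: "nn R"
  shows "\<exists>R'. good R' \<and> nn R' \<and> d_alpha N k (dser h (op_mult h V R)) = dser h (op_mult h V R')"
proof -
  define Rx where "Rx = op_partial (DX k) R"
  define Rs where "Rs = op_partial DS R"
  define Vx where "Vx = op_partial (DX k) V"
  define Vs where "Vs = op_partial DS V"
  define Ws where "Ws = op_partial DS W"
  define P where "P = Pk k"
  define LL where "LL = Lk k"
  define La where "La = Lam (int (N * k))"
  have g: "good Rx" "good Rs" "good Vx" "good Vs" "good Ws" "good P" "good LL" "good La" "good R" "good V" "good W"
    unfolding Rx_def Rs_def Vx_def Vs_def Ws_def P_def LL_def La_def by (auto intro!: gdI G gR)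
  define T1 where "T1 = op_mult h (op_mult h V (op_mult h LL Ws)) V"
  have gT1: "good T1" unfolding T1_def by (auto intro!: gdI g)
  define R' where "R' = op_sub (op_sub Rx (op_scale (1 / h) (op_mult h P R))) (op_mult h LL Rs)"
  have gR': "good R'" unfolding R'_def by (auto intro!: gdI g)
  have nR': "nn R'" unfolding R'_def Rx_def Rs_def P_def LL_def
    by (intro nn_sub nn_scale nn_mult nn_partial nR nnP nnLk)
  have f1: "op_partial (DX k) (op_mult h V R) = op_add (op_mult h Vx R) (op_mult h V Rx)"
    unfolding Vx_def Rx_def by (rule partial_op_mult) (auto intro!: g)
  have f2: "op_mult h Vx R = op_scale (-1) (op_add (op_mult h T1 R) (op_scale (1 / h) (op_mult h V (op_mult h P R))))"
  proof -
    have "Vx = op_scale (-1) (op_mult h (op_mult h V (op_partial (DX k) W)) V)" unfolding Vx_def by (rule dV)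
    also have "op_partial (DX k) W = op_add (op_mult h LL Ws) (op_scale (1 / h) (op_mult h P W))"
      unfolding LL_def Ws_def P_def by (rule Wx[OF k])
    also have "op_mult h V (op_add (op_mult h LL Ws) (op_scale (1 / h) (op_mult h P W)))
       = op_add (op_mult h V (op_mult h LL Ws)) (op_scale (1 / h) (op_mult h V (op_mult h P W)))"
      by (subst mult_scale_right mult_add_right, (auto intro!: gdI g)[3])+ (rule refl)?
    also have "op_mult h (op_add (op_mult h V (op_mult h LL Ws)) (op_scale (1 / h) (op_mult h V (op_mult h P W)))) V
       = op_add T1 (op_scale (1 / h) (op_mult h (op_mult h V (op_mult h P W)) V))"
      unfolding T1_def by (subst mult_scale_left mult_add_left, (auto intro!: gdI g)[3])+ (rule refl)?
    also have "op_mult h (op_mult h V (op_mult h P W)) V = op_mult h V P"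
      by (rule sandwich) (rule g)
    finally have "Vx = op_scale (-1) (op_add T1 (op_scale (1 / h) (op_mult h V P)))" .
    then have "op_mult h Vx R = op_scale (-1) (op_add (op_mult h T1 R) (op_scale (1 / h) (op_mult h (op_mult h V P) R)))"
      by (simp only:) (subst mult_scale_left mult_add_left, (auto intro!: gdI g gT1)[3])+
    also have "op_mult h (op_mult h V P) R = op_mult h V (op_mult h P R)"
      by (rule op_mult_assoc) (auto intro!: gdI g)
    finally show ?thesis .
  qed
  have f3: "op_mult h La (op_partial DS (op_mult h V R)) = op_add (op_scale (-1) (op_mult h T1 R)) (op_mult h V (op_mult h LL Rs))"
  proof -
    have "op_partial DS (op_mult h V R) = op_add (op_mult h Vs R) (op_mult h V Rs)"
      unfolding Vs_def Rs_def by (rule partial_op_mult) (auto intro!: g)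
    then have "op_mult h La (op_partial DS (op_mult h V R)) = op_add (op_mult h La (op_mult h Vs R)) (op_mult h La (op_mult h V Rs))"
      by (simp only:) (rule mult_add_right; auto intro!: gdI g)
    also have "op_mult h La (op_mult h Vs R) = op_scale (-1) (op_mult h T1 R)"
    proof -
      have LaV: "op_mult h La V = op_mult h V LL" unfolding La_def LL_def by (rule VLk[symmetric])
      have LVs: "op_mult h La Vs = op_scale (-1) T1"
      proof -
        have "op_mult h La Vs = op_mult h La (op_scale (-1) (op_mult h (op_mult h V Ws) V))"
          unfolding Vs_def Ws_def by (subst dV) (rule refl)
        also have "\<dots> = op_scale (-1) (op_mult h La (op_mult h (op_mult h V Ws) V))"
          by (rule mult_scale_right) (auto intro!: gdI g)
        also have "op_mult h La (op_mult h (op_mult h V Ws) V) = T1"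
        proof -
          have "op_mult h La (op_mult h (op_mult h V Ws) V) = op_mult h (op_mult h La (op_mult h V Ws)) V"
            by (rule op_mult_assoc[symmetric]) (auto intro!: gdI g)
          also have "op_mult h La (op_mult h V Ws) = op_mult h (op_mult h La V) Ws"
            by (rule op_mult_assoc[symmetric]) (auto intro!: gdI g)
          also have "\<dots> = op_mult h V (op_mult h LL Ws)" unfolding LaV
            by (rule op_mult_assoc) (auto intro!: gdI g)
          finally show ?thesis unfolding T1_def .
        qed
        finally show ?thesis .
      qed
      have "op_mult h La (op_mult h Vs R) = op_mult h (op_mult h La Vs) R"
        by (rule op_mult_assoc[symmetric]) (auto intro!: gdI g)
      also have "\<dots> = op_mult h (op_scale (-1) T1) R" unfolding LVs ..
      also have "op_mult h (op_scale (-1) T1) R = op_scale (-1) (op_mult h T1 R)"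
        by (rule mult_scale_left) (auto intro!: gdI g gT1)
      finally show ?thesis .
    qed
    also have "op_mult h La (op_mult h V Rs) = op_mult h V (op_mult h LL Rs)"
    proof -
      have "op_mult h La (op_mult h V Rs) = op_mult h (op_mult h La V) Rs"
        by (rule op_mult_assoc[symmetric]) (auto intro!: gdI g)
      also have "op_mult h La V = op_mult h V LL" unfolding La_def LL_def by (rule VLk[symmetric])
      also have "op_mult h (op_mult h V LL) Rs = op_mult h V (op_mult h LL Rs)"
        by (rule op_mult_assoc) (auto intro!: gdI g)
      finally show ?thesis .
    qed
    finally show ?thesis .
  qed
  have f4: "op_mult h V R' = op_sub (op_sub (op_mult h V Rx) (op_scale (1 / h) (op_mult h V (op_mult h P R)))) (op_mult h V (op_mult h LL Rs))"
    unfolding R'_def by (subst mult_scale_right mult_sub_right, (auto intro!: gdI g)[3])+ (rule refl)?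
  have "d_alpha N k (dser h (op_mult h V R)) = dser h (op_mult h V R')"
    unfolding dser_dalpha La_def[symmetric] f1 f2 f3 f4 Rx_def[symmetric]
    by (rule arg_cong[where f = "dser h"]) (intro ext, simp add: op_sub_def op_add_def op_scale_def algebra_simps)
  then show ?thesis using gR' nR' by blast
qed


lemma wave_fold:
  assumes ks: "\<forall>k\<in>set ks. k \<ge> 1" and g0: "good Q0" and n0: "nn Q0"
  shows "\<exists>T. good T \<and> nn T \<and> fold (d_alpha N) ks (op_mult h Q0 W) = op_mult h T W"
proof -
  have step: "\<exists>T. good T \<and> nn T \<and> d_alpha N k F = op_mult h T W"
    if k: "1 \<le> k" and F: "\<exists>T. good T \<and> nn T \<and> F = op_mult h T W" for k F
  proof -
    obtain T1 where T1: "good T1" "nn T1" "F = op_mult h T1 W" using F by blast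
    show ?thesis using wave_step[OF k T1(1) T1(2)] unfolding T1(3) .
  qed
  show ?thesis
    by (rule fold_inv[where P = "\<lambda>k. 1 \<le> k" and I = "\<lambda>F. \<exists>T. good T \<and> nn T \<and> F = op_mult h T W"
        and f = "d_alpha N" and ks = ks and x = "op_mult h Q0 W"])
       (use ks step g0 n0 in auto)
qed

lemma dual_fold_alpha:
  assumes ks: "\<forall>k\<in>set ks. k \<ge> 1" and g0: "good Q0" and n0: "nn Q0"
  shows "\<exists>T. good T \<and> nn T \<and> fold (d_alpha N) ks (dser h (op_mult h V Q0)) = dser h (op_mult h V T)"
proof -
  have step: "\<exists>T. good T \<and> nn T \<and> d_alpha N k F = dser h (op_mult h V T)"
    if k: "1 \<le> k" and F: "\<exists>T. good T \<and> nn T \<and> F = dser h (op_mult h V T)" for k F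
  proof -
    obtain T1 where T1: "good T1" "nn T1" "F = dser h (op_mult h V T1)" using F by blast
    show ?thesis using dual_alpha_step[OF k T1(1) T1(2)] unfolding T1(3) .
  qed
  show ?thesis
    by (rule fold_inv[where P = "\<lambda>k. 1 \<le> k" and I = "\<lambda>F. \<exists>T. good T \<and> nn T \<and> F = dser h (op_mult h V T)"
        and f = "d_alpha N" and ks = ks and x = "dser h (op_mult h V Q0)"])
       (use ks step g0 n0 in auto)
qed

lemma dual_fold_y:
  assumes ks: "\<forall>k\<in>set ks. k \<ge> 1" and g0: "good Q0" and n0: "nn Q0"
  shows "\<exists>T. good T \<and> nn T \<and> fold (d_y h) ks (dser h (op_mult h V Q0)) = dser h (op_mult h V T)"
proof -
  have step: "\<exists>T. good T \<and> nn T \<and> d_y h k F = dser h (op_mult h V T)"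
    if k: "1 \<le> k" and F: "\<exists>T. good T \<and> nn T \<and> F = dser h (op_mult h V T)" for k F
  proof -
    obtain T1 where T1: "good T1" "nn T1" "F = dser h (op_mult h V T1)" using F by blast
    show ?thesis using dual_y_step[OF k T1(1) T1(2)] unfolding T1(3) .
  qed
  show ?thesis
    by (rule fold_inv[where P = "\<lambda>k. 1 \<le> k" and I = "\<lambda>F. \<exists>T. good T \<and> nn T \<and> F = dser h (op_mult h V T)"
        and f = "d_y h" and ks = ks and x = "dser h (op_mult h V Q0)"])
       (use ks step g0 n0 in auto)
qed

lemma main_result:
  assumes "set as \<subseteq> {1..} \<and> set bs \<subseteq> {1..} \<and> set ys \<subseteq> {1..} \<and> s - s' = real l * h"
  shows "res_prod (int (m * N) + int l)
       (\<lambda>j. fold (d_alpha N) as (wave_series W) j s t x)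
       (\<lambda>j. fold (d_y h) ys (fold (d_alpha N) bs (dual_wave_series h W)) j s' t x) = 0"
proof -
  have as: "\<forall>k\<in>set as. k \<ge> 1" and bs: "\<forall>k\<in>set bs. k \<ge> 1" and ys: "\<forall>k\<in>set ys. k \<ge> 1"
    using assms by auto
  have s': "s' = s - real l * h" using assms by simp
  have w0: "wave_series W = op_mult h (Lam 0) W" by (simp add: wave_series_def mult_Lam0_left)
  obtain Q where Q: "good Q" "nn Q" "fold (d_alpha N) as (wave_series W) = op_mult h Q W"
    using wave_fold[OF as good_Lam nn_Lam[of 0]] unfolding w0 by auto
  have d0: "dual_wave_series h W = dser h (op_mult h V (Lam 0))"
    by (simp add: dual_wave_eq[OF unipW] mult_Lam0_right)
  obtain R1 where R1: "good R1" "nn R1" "fold (d_alpha N) bs (dual_wave_series h W) = dser h (op_mult h V R1)"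
    using dual_fold_alpha[OF bs good_Lam nn_Lam[of 0]] unfolding d0 by auto
  obtain R where R: "good R" "nn R" "fold (d_y h) ys (fold (d_alpha N) bs (dual_wave_series h W)) = dser h (op_mult h V R)"
    using dual_fold_y[OF ys R1(1,2)] unfolding R1(3) by auto
  let ?n = "int (m * N)"
  have g: "good Q" "good R" "good V" "good W" "good (Lk m)" "good (Lam ?n)"
    using Q R by (auto intro!: G good_Lam)
  have "res_prod (?n + int l) (\<lambda>j. fold (d_alpha N) as (wave_series W) j s t x)
       (\<lambda>j. fold (d_y h) ys (fold (d_alpha N) bs (dual_wave_series h W)) j s' t x)
     = op_mult h (op_mult h (op_mult h Q W) (Lam ?n)) (op_mult h V R) (- 1 - int l) s t x"
    unfolding Q(3) R(3) by (rule residue) (auto intro!: gdI g s')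
  also have "op_mult h (op_mult h (op_mult h Q W) (Lam ?n)) (op_mult h V R) = op_mult h Q (op_mult h (Lk m) R)"
  proof -
    have "op_mult h (op_mult h Q W) (Lam ?n) = op_mult h Q (op_mult h W (Lam ?n))"
      by (rule op_mult_assoc) (auto intro!: gdI g)
    also have "op_mult h W (Lam ?n) = op_mult h (Lk m) W"
      using LkW[of m] by (simp add: mult.commute)
    finally have 1: "op_mult h (op_mult h Q W) (Lam ?n) = op_mult h Q (op_mult h (Lk m) W)" .
    have "op_mult h (op_mult h Q (op_mult h (Lk m) W)) (op_mult h V R) = op_mult h Q (op_mult h (op_mult h (Lk m) W) (op_mult h V R))"
      by (rule op_mult_assoc) (auto intro!: gdI g)
    also have "op_mult h (op_mult h (Lk m) W) (op_mult h V R) = op_mult h (Lk m) (op_mult h W (op_mult h V R))"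
      by (rule op_mult_assoc) (auto intro!: gdI g)
    also have "op_mult h W (op_mult h V R) = R"
    proof -
      have "op_mult h W (op_mult h V R) = op_mult h (op_mult h W V) R"
        by (rule op_mult_assoc[symmetric]) (auto intro!: gdI g)
      then show ?thesis by (simp add: WV mult_Lam0_left)
    qed
    finally show ?thesis unfolding 1 .
  qed
  also have "op_mult h Q (op_mult h (Lk m) R) (- 1 - int l) = czero"
    using nn_mult[OF Q(2) nn_mult[OF nnLk R(2)]] unfolding nn_def by simp
  finally show ?thesis by (simp add: czero_def)
qed

end

theorem proposition1:
  fixes h :: real and N m :: nat and W :: pdo
  assumes "h \<noteq> 0" and "N \<ge> 1"
    and "lattice_GD_solution h N W"
  shows "\<forall>as bs ys :: nat list. \<forall>s s' :: real. \<forall>t x :: nat \<Rightarrow> real. \<forall>l :: nat.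
     set as \<subseteq> {1..} \<and> set bs \<subseteq> {1..} \<and> set ys \<subseteq> {1..} \<and> s - s' = real l * h \<longrightarrow>
     res_prod (int (m * N) + int l)
       (\<lambda>j. fold (d_alpha N) as (wave_series W) j s t x)
       (\<lambda>j. fold (d_y h) ys (fold (d_alpha N) bs (dual_wave_series h W)) j s' t x) = 0"
  using main_result[OF assms(1) assms(3)] by blast



end
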